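(* Assume conditions (C1)–(C6) and fix $\zeta\in\Theta$. Let $\varphi_\zeta$ be the bounded solution of the network $(N_\zeta)$ on $\mathbb T_0$ defined below. Then for every $t^0\in\mathbb T_0$ and every solution $x$ of $(N_\zeta)$ on $\mathbb T_0\cap[t^0,\infty)$ one has $\|x(t)-\varphi_\zeta(t)\|\to0$ as $t\to\infty$, $t\in\mathbb T_0$.
   Context: Fix integers $m,n\ge1$ and $r\ge0$. Cells are indexed by pairs $(i,j)$, $1\le i\le m$, $1\le j\le n$. The $r$-neighbourhood of $(i,j)$ is $N_r(i,j)=\{(h,l):1\le h\le m,\ 1\le l\le n,\ \max(|h-i|,|l-j|)\le r\}$. Fix constants $a_{ij}>0$, $C^{hl}_{ij}\ge0$, and a continuous function $f:\mathbb R\to\mathbb R$. Vectors of $\mathbb R^{mn}$ are written $v=\{v_{ij}\}$, with norm $\|v\|=\max_{(i,j)}|v_{ij}|$. Time scale: $\{\theta_k\}_{k\in\mathbb Z}$ is strictly increasing, $\theta_{-1}<0<\theta_0$, and there exist $\omega>0$ and $p\in\mathbb N$ with $\theta_{k+2p}=\theta_k+\omega$ for all $k$. Set $\mathbb T_0=\bigcup_{k\in\mathbb Z}[\theta_{2k-1},\theta_{2k}]$, $\delta_k=\theta_{2k+1}-\theta_{2k}$, $\eta_k=\theta_{2k}-\theta_{2k-1}$ (both $p$-periodic in $k$), $\delta=\max_{1\le k\le p}\delta_k$. On $\mathbb T_0'=\mathbb T_0\setminus\{\theta_{2k-1}:k\in\mathbb Z\}$ define $\psi(t)=t-\sum_{0<\theta_{2k}<t}\delta_k$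 for $t\ge0$ and $\psi(t)=t+\sum_{t\le\theta_{2k}<0}\delta_k$ for $t<0$; put $s_k=\psi(\theta_{2k})$, so $s_k-s_{k-1}=\eta_k$, and write $\psi(\omega):=\omega-\sum_{k=1}^p\delta_k=\sum_{k=1}^p\eta_k$, so $s_{k+p}=s_k+\psi(\omega)$. Inputs: $\Lambda\subset\mathbb R^{mn}$ is compact and $F:\Lambda\to\Lambda$ is continuous. $\Theta$ is the set of all sequences $\zeta=\{\zeta_k\}_{k\in\mathbb Z}$, $\zeta_k=\{\zeta^{ij}_k\}\in\Lambda$, with $\zeta_{k+1}=F(\zeta_k)$ for all $k\in\mathbb Z$. For $\zeta\in\Theta$, $L_{ij}(t,\zeta)=\zeta^{ij}_k$ for $t\in[\theta_{2k-1},\theta_{2k}]$. Network $(N_\zeta)$ on $\mathbb T_0$: $x^\Delta_{ij}(t)=-a_{ij}x_{ij}(t)-\sum_{(h,l)\in N_r(i,j)}C^{hl}_{ij}f(x_{hl}(t))x_{ij}(t)+L_{ij}(t,\zeta)$, $t\in\mathbb T_0$, where the $\Delta$-derivative at $\theta_{2k}$ is $(x(\theta_{2k+1})-x(\theta_{2k}))/\delta_k$ and elsewhere the ordinary derivative. Concretely, a solution on $\mathbb T_0$ (or on $\mathbb T_0\cap[t^0,\infty)$) is a function continuous and (one-sidedly at endpoints) differentiable on each interval $[\theta_{2k-1},\theta_{2k}]$ of its domain satisfying there $x_{ij}'=-a_{ij}x_{ij}-\sum_{(h,l)\in N_r(i,j)}C^{hl}_{ij}f(x_{hl})x_{ij}+\zeta^{ij}_k$,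 together with $x_{ij}(\theta_{2k+1})=(1-\delta_ka_{ij})x_{ij}(\theta_{2k})-\delta_k\sum_{(h,l)\in N_r(i,j)}C^{hl}_{ij}f(x_{hl}(\theta_{2k}))x_{ij}(\theta_{2k})+\delta_k\zeta^{ij}_k$. Impulsive system $(I_\zeta)$: for $s\in(s_{k-1},s_k)$, $y_{ij}'(s)=-a_{ij}y_{ij}(s)-\sum_{(h,l)\in N_r(i,j)}C^{hl}_{ij}f(y_{hl}(s))y_{ij}(s)+\zeta^{ij}_k$, and at $s=s_k$, $y_{ij}(s_k+)-y_{ij}(s_k)=-\delta_ka_{ij}y_{ij}(s_k)-\delta_k\sum_{(h,l)\in N_r(i,j)}C^{hl}_{ij}f(y_{hl}(s_k))y_{ij}(s_k)+\delta_k\zeta^{ij}_k$. Solutions are left-continuous, continuous except for discontinuities of the first kind at the $s_k$. Let $u_{ij}(s,\tau)=e^{-a_{ij}(s-\tau)}\prod_{\nu=l}^{k}(1-\delta_\nu a_{ij})$ if $s_{l-1}<\tau\le s_l$, $s_k<s\le s_{k+1}$, $k\ge l$, and $u_{ij}(s,\tau)=e^{-a_{ij}(s-\tau)}$ if $s_k<\tau\le s\le s_{k+1}$. Let $\lambda_{ij}=a_{ij}-\frac1{\psi(\omega)}\sum_{\nu=0}^{p-1}\ln|1-\delta_\nu a_{ij}|$, $\lambda=\min_{(i,j)}\lambda_{ij}$. Conditions: (C1) $\delta_ka_{ij}\ne1$ for all $i,j,k$; (C2) $\lambda>0$; (C3) $\sup_{s\in\mathbb R}|f(s)|\le M_f$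 for some $M_f>0$; (C4) $|f(s_1)-f(s_2)|\le L_f|s_1-s_2|$ for all $s_1,s_2$, for some $L_f>0$. Under (C1),(C2) fix positive numbers $K_{ij}$ with $|u_{ij}(s,\tau)|\le K_{ij}e^{-\lambda_{ij}(s-\tau)}$ for $s\ge\tau$. Define $\bar c=\max_{(i,j)}\big(\frac{K_{ij}}{\lambda_{ij}}+\frac{p\delta K_{ij}}{1-e^{-\lambda_{ij}\psi(\omega)}}\big)\sum_{(h,l)\in N_r(i,j)}C^{hl}_{ij}$, $M_F=\max_{\eta\in\Lambda}\|F(\eta)\|$, $H_0=\frac{M_F}{1-M_f\bar c}\max_{(i,j)}\big(\frac{K_{ij}}{\lambda_{ij}}+\frac{p\delta K_{ij}}{1-e^{-\lambda_{ij}\psi(\omega)}}\big)$, $\bar d=(M_f+H_0L_f)\max_{(i,j)}K_{ij}\sum_{(h,l)\in N_r(i,j)}C^{hl}_{ij}$. (C5) $(M_f+H_0L_f)\bar c<1$. (C6) $-\lambda+\bar d+\frac{p}{\psi(\omega)}\ln(1+\delta\bar d)<0$. Under (C1)–(C5), for $\zeta\in\Theta$ the system $(I_\zeta)$ has a unique solution $\phi_\zeta$ on $\mathbb R$ with $\sup_s\|\phi_\zeta(s)\|\le H_0$; define $\varphi_\zeta:\mathbb T_0\to\mathbb R^{mn}$ by $\varphi_\zeta(t)=\phi_\zeta(\psi(t))$ for $t\in\mathbb T_0'$ and $\varphi_\zeta(\theta_{2k+1})=\phi_\zeta(s_k+)$. Then $\varphi_\zeta$ is the unique solution of $(N_\zeta)$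 on $\mathbb T_0$ with $\sup_{t\in\mathbb T_0}\|\varphi_\zeta(t)\|\le H_0$. *)

theory Defs
  imports "HOL-Analysis.Analysis"
begin

text \<open>Cells (i,j) with 1 <= i <= m, 1 <= j <= n; vectors of R^(mn) are functions
  nat * nat => real vanishing outside the cell set.\<close>

definition Icells :: "nat \<Rightarrow> nat \<Rightarrow> (nat \<times> nat) set" where
  "Icells m n = {1..m} \<times> {1..n}"

definition nbhd :: "nat \<Rightarrow> nat \<Rightarrow> nat \<Rightarrow> nat \<times> nat \<Rightarrow> (nat \<times> nat) set" where
  "nbhd m n r ij = {(h,l) \<in> Icells m n.
      max \<bar>int h - int (fst ij)\<bar> \<bar>int l - int (snd ij)\<bar> \<le> int r}"

definition Rmn :: "nat \<Rightarrow> nat \<Rightarrow> (nat \<times> nat \<Rightarrow> real) set" where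
  "Rmn m n = {v. \<forall>ij. ij \<notin> Icells m n \<longrightarrow> v ij = 0}"

definition vnorm :: "nat \<Rightarrow> nat \<Rightarrow> (nat \<times> nat \<Rightarrow> real) \<Rightarrow> real" where
  "vnorm m n v = Max ((\<lambda>ij. \<bar>v ij\<bar>) ` Icells m n)"

definition T0 :: "(int \<Rightarrow> real) \<Rightarrow> real set" where
  "T0 \<theta> = (\<Union>k::int. {\<theta> (2*k - 1) .. \<theta> (2*k)})"

definition dlt :: "(int \<Rightarrow> real) \<Rightarrow> int \<Rightarrow> real" where
  "dlt \<theta> k = \<theta> (2*k + 1) - \<theta> (2*k)"

definition eta :: "(int \<Rightarrow> real) \<Rightarrow> int \<Rightarrow> real" where
  "eta \<theta> k = \<theta> (2*k) - \<theta> (2*k - 1)"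

definition dmax :: "(int \<Rightarrow> real) \<Rightarrow> nat \<Rightarrow> real" where
  "dmax \<theta> p = Max (dlt \<theta> ` {1 .. int p})"

definition psi :: "(int \<Rightarrow> real) \<Rightarrow> real \<Rightarrow> real" where
  "psi \<theta> t = (if 0 \<le> t then t - sum (dlt \<theta>) {k. 0 < \<theta> (2*k) \<and> \<theta> (2*k) < t}
               else t + sum (dlt \<theta>) {k. t \<le> \<theta> (2*k) \<and> \<theta> (2*k) < 0})"

definition psi_om :: "(int \<Rightarrow> real) \<Rightarrow> nat \<Rightarrow> real" where
  "psi_om \<theta> p = sum (eta \<theta>) {1 .. int p}"

definition sk :: "(int \<Rightarrow> real) \<Rightarrow> int \<Rightarrow> real" where
  "sk \<theta> k = psi \<theta> (\<theta> (2*k))"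

definition uu :: "(int \<Rightarrow> real) \<Rightarrow> real \<Rightarrow> real \<Rightarrow> real \<Rightarrow> real" where
  "uu \<theta> a s \<tau> = exp (- a * (s - \<tau>)) *
      prod (\<lambda>\<nu>. 1 - dlt \<theta> \<nu> * a) {\<nu>. \<tau> \<le> sk \<theta> \<nu> \<and> sk \<theta> \<nu> < s}"

definition lam :: "(int \<Rightarrow> real) \<Rightarrow> nat \<Rightarrow> real \<Rightarrow> real" where
  "lam \<theta> p a = a - (1 / psi_om \<theta> p) * (\<Sum>\<nu>\<in>{0 .. int p - 1}. ln \<bar>1 - dlt \<theta> \<nu> * a\<bar>)"

definition lam_min :: "nat \<Rightarrow> nat \<Rightarrow> (int \<Rightarrow> real) \<Rightarrow> nat \<Rightarrow> (nat \<times> nat \<Rightarrow> real) \<Rightarrow> real" where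
  "lam_min m n \<theta> p a = Min ((\<lambda>ij. lam \<theta> p (a ij)) ` Icells m n)"

definition Theta :: "(nat \<times> nat \<Rightarrow> real) set \<Rightarrow> ((nat \<times> nat \<Rightarrow> real) \<Rightarrow> (nat \<times> nat \<Rightarrow> real))
    \<Rightarrow> (int \<Rightarrow> nat \<times> nat \<Rightarrow> real) set" where
  "Theta \<Lambda> F = {\<zeta>. \<forall>k. \<zeta> k \<in> \<Lambda> \<and> \<zeta> (k + 1) = F (\<zeta> k)}"

definition Gfac :: "(int \<Rightarrow> real) \<Rightarrow> nat \<Rightarrow> (nat \<times> nat \<Rightarrow> real) \<Rightarrow> (nat \<times> nat \<Rightarrow> real)
    \<Rightarrow> nat \<times> nat \<Rightarrow> real" where
  "Gfac \<theta> p K a ij = K ij / lam \<theta> p (a ij)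
      + real p * dmax \<theta> p * K ij / (1 - exp (- lam \<theta> p (a ij) * psi_om \<theta> p))"

definition Csum :: "nat \<Rightarrow> nat \<Rightarrow> nat \<Rightarrow> (nat \<times> nat \<Rightarrow> nat \<times> nat \<Rightarrow> real) \<Rightarrow> nat \<times> nat \<Rightarrow> real" where
  "Csum m n r C ij = (\<Sum>hl\<in>nbhd m n r ij. C ij hl)"

definition cbar where
  "cbar m n r \<theta> p K a C = Max ((\<lambda>ij. Gfac \<theta> p K a ij * Csum m n r C ij) ` Icells m n)"

definition MF where
  "MF m n \<Lambda> F = Sup ((\<lambda>\<eta>. vnorm m n (F \<eta>)) ` \<Lambda>)"

definition H0 where
  "H0 m n r \<theta> p K a C \<Lambda> F Mf =
     MF m n \<Lambda> F / (1 - Mf * cbar m n r \<theta> p K a C) * Max (Gfac \<theta> p K a ` Icells m n)"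

definition dbar where
  "dbar m n r \<theta> p K a C \<Lambda> F Mf Lf =
     (Mf + H0 m n r \<theta> p K a C \<Lambda> F Mf * Lf) * Max ((\<lambda>ij. K ij * Csum m n r C ij) ` Icells m n)"

text \<open>Solutions of the network (N_zeta) on T0 \<inter> D (D = UNIV or D = {t0..}):
  on every interval [theta(2k-1), theta(2k)] \<inter> D the function is (one-sidedly)
  differentiable and satisfies the ODE, and the jump relation holds from
  theta(2k) to theta(2k+1) whenever theta(2k) lies in D.\<close>

definition network_sol where
  "network_sol m n r a C f \<theta> \<zeta> D x \<longleftrightarrow>
     (\<forall>k::int. \<forall>ij\<in>Icells m n.
        (let S = {\<theta> (2*k - 1) .. \<theta> (2*k)} \<inter> D in
          \<forall>t\<in>S. ((\<lambda>s. x s ij) has_real_derivative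
             (- a ij * x t ij - (\<Sum>hl\<in>nbhd m n r ij. C ij hl * f (x t hl) * x t ij) + \<zeta> k ij))
             (at t within S))
      \<and> (\<theta> (2*k) \<in> D \<longrightarrow>
          x (\<theta> (2*k + 1)) ij = (1 - dlt \<theta> k * a ij) * x (\<theta> (2*k)) ij
             - dlt \<theta> k * (\<Sum>hl\<in>nbhd m n r ij. C ij hl * f (x (\<theta> (2*k)) hl) * x (\<theta> (2*k)) ij)
             + dlt \<theta> k * \<zeta> k ij))"

end

theory Submission
  imports Defs
begin

lemma theta_pos_iff:
  assumes sm: "strict_mono (\<theta>::int\<Rightarrow>real)" and "\<theta> (-1) < 0" "0 < \<theta> 0"
  shows "0 < \<theta> (2*j) \<longleftrightarrow> 0 \<le> j"
proof
  assume "0 < \<theta> (2*j)"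
  show "0 \<le> j"
  proof (rule ccontr)
    assume "\<not> 0 \<le> j"
    then have "2*j < -1" by simp
    then have "\<theta> (2*j) < \<theta> (-1)" using sm strict_mono_less by blast
    with assms \<open>0 < \<theta> (2*j)\<close> show False by simp
  qed
next
  assume "0 \<le> j"
  then have "\<theta> 0 \<le> \<theta> (2*j)" using sm strict_mono_less_eq by fastforce
  with assms show "0 < \<theta> (2*j)" by simp
qed

lemma theta_neg_iff:
  assumes sm: "strict_mono (\<theta>::int\<Rightarrow>real)" and "\<theta> (-1) < 0" "0 < \<theta> 0"
  shows "\<theta> (2*j) < 0 \<longleftrightarrow> j < 0"
proof
  assume "\<theta> (2*j) < 0"
  then show "j < 0" using theta_pos_iff[OF assms, of j] by linarith
next
  assume "j < 0"
  then have "2*j < -1" by simp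
  then have "\<theta> (2*j) < \<theta> (-1)" using sm strict_mono_less by blast
  with assms show "\<theta> (2*j) < 0" by simp
qed

lemma sk_nonneg:
  assumes sm: "strict_mono (\<theta>::int\<Rightarrow>real)" and "\<theta> (-1) < 0" "0 < \<theta> 0" and "0 \<le> k"
  shows "sk \<theta> k = \<theta> (2*k) - sum (dlt \<theta>) {0..<k}"
proof -
  have pos: "0 < \<theta> (2*k)" using theta_pos_iff[OF assms(1-3)] assms(4) by simp
  have "{j. 0 < \<theta> (2*j) \<and> \<theta> (2*j) < \<theta> (2*k)} = {0..<k}"
  proof -
    have "\<theta> (2*j) < \<theta> (2*k) \<longleftrightarrow> j < k" for j
      using sm strict_mono_less[of \<theta> "2*j" "2*k"] by simp
    then show ?thesis using theta_pos_iff[OF assms(1-3)] by auto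
  qed
  then show ?thesis unfolding sk_def psi_def using pos by simp
qed

lemma sk_neg:
  assumes sm: "strict_mono (\<theta>::int\<Rightarrow>real)" and "\<theta> (-1) < 0" "0 < \<theta> 0" and "k < 0"
  shows "sk \<theta> k = \<theta> (2*k) + sum (dlt \<theta>) {k..<0}"
proof -
  have neg: "\<theta> (2*k) < 0" using theta_neg_iff[OF assms(1-3)] assms(4) by simp
  have "{j. \<theta> (2*k) \<le> \<theta> (2*j) \<and> \<theta> (2*j) < 0} = {k..<0}"
  proof -
    have "\<theta> (2*k) \<le> \<theta> (2*j) \<longleftrightarrow> k \<le> j" for j
      using sm strict_mono_less_eq[of \<theta> "2*k" "2*j"] by simp
    then show ?thesis using theta_neg_iff[OF assms(1-3)] by auto
  qed
  then show ?thesis unfolding sk_def psi_def using neg by simp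
qed

lemma sk_diff:
  assumes sm: "strict_mono (\<theta>::int\<Rightarrow>real)" and h: "\<theta> (-1) < 0" "0 < \<theta> 0"
  shows "sk \<theta> k = sk \<theta> (k-1) + eta \<theta> k"
proof (cases "1 \<le> k")
  case True
  have e: "{0..<k} = insert (k-1) {0..<k-1}" using True by auto
  show ?thesis
    using sk_nonneg[OF assms, of k] sk_nonneg[OF assms, of "k-1"] True
    by (simp add: e eta_def dlt_def algebra_simps)
next
  case False
  show ?thesis
  proof (cases "k = 0")
    case True
    have "sk \<theta> 0 = \<theta> 0" using sk_nonneg[OF assms, of 0] by simp
    moreover have "sk \<theta> (-1) = \<theta> (-1)"
    proof -
      have "{-1..<0::int} = {-1}" by auto
      then show ?thesis using sk_neg[OF assms, of "-1"] by (simp add: dlt_def)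
    qed
    ultimately show ?thesis using True by (simp add: eta_def)
  next
    case False
    then have k: "k < 0" using \<open>\<not> 1 \<le> k\<close> by simp
    have e: "{k-1..<0} = insert (k-1) {k..<0}" using k by auto
    show ?thesis
      using sk_neg[OF assms, of k] sk_neg[OF assms, of "k-1"] k
      by (simp add: e eta_def dlt_def algebra_simps)
  qed
qed

lemma eta_pos: "strict_mono (\<theta>::int\<Rightarrow>real) \<Longrightarrow> 0 < eta \<theta> k"
  unfolding eta_def using strict_mono_less[of \<theta> "2*k-1" "2*k"] by simp

lemma dlt_pos: "strict_mono (\<theta>::int\<Rightarrow>real) \<Longrightarrow> 0 < dlt \<theta> k"
  unfolding dlt_def using strict_mono_less[of \<theta> "2*k" "2*k+1"] by simp

lemma sk_strict_mono:
  assumes sm: "strict_mono (\<theta>::int\<Rightarrow>real)" and h: "\<theta> (-1) < 0" "0 < \<theta> 0"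
  shows "strict_mono (sk \<theta>)"
proof -
  have step: "sk \<theta> i < sk \<theta> (i+1)" for i
    using sk_diff[OF assms, of "i+1"] eta_pos[OF sm, of "i+1"] by simp
  have "sk \<theta> j < sk \<theta> (j + 1 + int d)" for j d
  proof (induction d)
    case 0 then show ?case using step by simp
  next
    case (Suc d)
    have "sk \<theta> (j + 1 + int d) < sk \<theta> (j + 1 + int d + 1)" by (rule step)
    then show ?case using Suc by (simp add: add.assoc)
  qed
  then show ?thesis unfolding strict_mono_def
    by (metis add.commute add_less_same_cancel1 zless_iff_Suc_zadd add.assoc add_Suc_right of_nat_Suc)
qed

lemma uu_eq:
  assumes sm: "strict_mono (\<theta>::int\<Rightarrow>real)" and h: "\<theta> (-1) < 0" "0 < \<theta> 0"
    and "sk \<theta> (k-1) < s" "s \<le> sk \<theta> k" "sk \<theta> (j-1) < \<tau>" "\<tau> \<le> sk \<theta> j"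
  shows "uu \<theta> a s \<tau> = exp (- a * (s - \<tau>)) * (\<Prod>\<nu>\<in>{j..<k}. 1 - dlt \<theta> \<nu> * a)"
proof -
  have m: "strict_mono (sk \<theta>)" using sk_strict_mono[OF sm h] .
  have "{\<nu>. \<tau> \<le> sk \<theta> \<nu> \<and> sk \<theta> \<nu> < s} = {j..<k}"
  proof (intro set_eqI iffI)
    fix \<nu> assume "\<nu> \<in> {\<nu>. \<tau> \<le> sk \<theta> \<nu> \<and> sk \<theta> \<nu> < s}"
    then have a: "\<tau> \<le> sk \<theta> \<nu>" "sk \<theta> \<nu> < s" by auto
    have "sk \<theta> (j-1) < sk \<theta> \<nu>" using a assms by linarith
    then have "j - 1 < \<nu>" using m strict_mono_less by blast
    moreover have "sk \<theta> \<nu> < sk \<theta> k" using a assms by linarith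
    then have "\<nu> < k" using m strict_mono_less by blast
    ultimately show "\<nu> \<in> {j..<k}" by auto
  next
    fix \<nu> assume "\<nu> \<in> {j..<k}"
    then have "j \<le> \<nu>" "\<nu> \<le> k - 1" by auto
    then have "sk \<theta> j \<le> sk \<theta> \<nu>" "sk \<theta> \<nu> \<le> sk \<theta> (k-1)"
      using m strict_mono_less_eq by blast+
    then show "\<nu> \<in> {\<nu>. \<tau> \<le> sk \<theta> \<nu> \<and> sk \<theta> \<nu> < s}" using assms by auto
  qed
  then show ?thesis unfolding uu_def by simp
qed

lemma kernel_bound:
  assumes sm: "strict_mono (\<theta>::int\<Rightarrow>real)" and h: "\<theta> (-1) < 0" "0 < \<theta> 0"
    and Kh: "\<forall>s \<tau>. \<tau> \<le> s \<longrightarrow> \<bar>uu \<theta> a s \<tau>\<bar> \<le> K * exp (- l * (s - \<tau>))"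
    and jk: "j \<le> k" and s: "sk \<theta> (k-1) \<le> s" "s \<le> sk \<theta> k"
    and t: "sk \<theta> (j-1) \<le> \<tau>" "\<tau> \<le> sk \<theta> j" and ts: "\<tau> \<le> s"
  shows "\<bar>exp (- a * (s - \<tau>)) * (\<Prod>\<nu>\<in>{j..<k}. 1 - dlt \<theta> \<nu> * a)\<bar> \<le> K * exp (- l * (s - \<tau>))"
proof -
  have m: "strict_mono (sk \<theta>)" using sk_strict_mono[OF sm h] .
  have k1: "sk \<theta> (k-1) < sk \<theta> k" "sk \<theta> (j-1) < sk \<theta> j"
    using strict_monoD[OF m, of "k-1" k] strict_monoD[OF m, of "j-1" j] by auto
  define P where "P = (\<Prod>\<nu>\<in>{j..<k}. 1 - dlt \<theta> \<nu> * a)"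
  define S where "S = (\<lambda>e::real. s + e * (sk \<theta> k - s))"
  define T where "T = (\<lambda>e::real. \<tau> + e * (sk \<theta> j - \<tau>))"
  define g where "g = (\<lambda>e. \<bar>exp (- a * (S e - T e)) * P\<bar> - K * exp (- l * (S e - T e)))"
  have ev: "eventually (\<lambda>e. g e \<le> 0) (at_right 0)"
  proof -
    have "eventually (\<lambda>e::real. 0 < e \<and> e < 1) (at_right 0)"
      using eventually_at_right_real[of 0 1] by simp
    then show ?thesis
    proof (rule eventually_mono)
      fix e :: real assume e: "0 < e \<and> e < 1"
      have Sk: "sk \<theta> (k-1) < S e" "S e \<le> sk \<theta> k"
      proof -
        have "e * (sk \<theta> k - s) \<le> (sk \<theta> k - s)" using e s by (intro mult_left_le_one_le) auto
        then show "S e \<le> sk \<theta> k" unfolding S_def by simp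
        have "(1 - e) * s \<ge> (1-e) * sk \<theta> (k-1)" using e s by (simp add: mult_left_mono)
        moreover have "e * sk \<theta> k > e * sk \<theta> (k-1)" using e k1 by simp
        ultimately show "sk \<theta> (k-1) < S e" unfolding S_def by (simp add: algebra_simps)
      qed
      have Tj: "sk \<theta> (j-1) < T e" "T e \<le> sk \<theta> j"
      proof -
        have "e * (sk \<theta> j - \<tau>) \<le> (sk \<theta> j - \<tau>)" using e t by (intro mult_left_le_one_le) auto
        then show "T e \<le> sk \<theta> j" unfolding T_def by simp
        have "(1 - e) * \<tau> \<ge> (1-e) * sk \<theta> (j-1)" using e t by (simp add: mult_left_mono)
        moreover have "e * sk \<theta> j > e * sk \<theta> (j-1)" using e k1 by simp
        ultimately show "sk \<theta> (j-1) < T e" unfolding T_def by (simp add: algebra_simps)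
      qed
      have TS: "T e \<le> S e"
      proof (cases "j = k")
        case True
        have "T e - S e = (1 - e) * (\<tau> - s)" unfolding T_def S_def using True by (simp add: algebra_simps)
        also have "\<dots> \<le> 0" using e ts by (simp add: mult_nonneg_nonpos)
        finally show ?thesis by simp
      next
        case False
        then have "j \<le> k - 1" using jk by simp
        then have "sk \<theta> j \<le> sk \<theta> (k-1)" using m strict_mono_less_eq by blast
        then show ?thesis using Sk Tj by simp
      qed
      have "uu \<theta> a (S e) (T e) = exp (- a * (S e - T e)) * P"
        unfolding P_def by (rule uu_eq[OF sm h Sk Tj])
      then show "g e \<le> 0" unfolding g_def using Kh TS by force
    qed
  qed
  have c: "continuous_on UNIV g" unfolding g_def S_def T_def by (intro continuous_intros)
  have "(g \<longlongrightarrow> g 0) (at_right 0)"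
    using c by (meson UNIV_I continuous_on_def filterlim_at_split tendsto_at_iff_tendsto_nhds)
  then have "g 0 \<le> 0" by (rule tendsto_upperbound[OF _ ev]) simp
  then show ?thesis unfolding g_def S_def T_def P_def by simp
qed

lemma deriv_mono_Icc:
  fixes F F' :: "real \<Rightarrow> real"
  assumes "a \<le> b"
    and d: "\<And>x. x \<in> {a..b} \<Longrightarrow> (F has_real_derivative F' x) (at x within {a..b})"
    and nn: "\<And>x. x \<in> {a..b} \<Longrightarrow> F' x \<ge> 0"
  shows "F a \<le> F b"
proof (rule DERIV_nonneg_imp_increasing_open[OF assms(1)])
  fix x assume x: "a < x" "x < b"
  then have "(F has_real_derivative F' x) (at x)"
    using d[of x] by (simp add: at_within_Icc_at)
  then show "\<exists>y. (F has_real_derivative y) (at x) \<and> 0 \<le> y" using nn[of x] x by auto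
next
  show "continuous_on {a..b} F"
    unfolding continuous_on_eq_continuous_within
    using d DERIV_continuous by blast
qed

lemma abs_diff_le_integral:
  fixes h h' g :: "real \<Rightarrow> real"
  assumes ab: "a \<le> b" and gc: "continuous_on {a..b} g"
    and d: "\<And>x. x \<in> {a..b} \<Longrightarrow> (h has_real_derivative h' x) (at x within {a..b})"
    and bd: "\<And>x. x \<in> {a..b} \<Longrightarrow> \<bar>h' x\<bar> \<le> g x"
  shows "\<bar>h b - h a\<bar> \<le> integral {a..b} g"
proof -
  have I: "((\<lambda>x. integral {a..x} g) has_real_derivative g x) (at x within {a..b})" if "x \<in> {a..b}" for x
    using integral_has_real_derivative[OF gc that] .
  have 1: "integral {a..a} g - h a \<le> integral {a..b} g - h b"
  proof (rule deriv_mono_Icc[OF ab, where F="\<lambda>x. integral {a..x} g - h x" and F'="\<lambda>x. g x - h' x"])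
    fix x assume x: "x \<in> {a..b}"
    show "((\<lambda>x. integral {a..x} g - h x) has_real_derivative g x - h' x) (at x within {a..b})"
      using I[OF x] d[OF x] by (rule DERIV_diff)
    show "0 \<le> g x - h' x" using bd[OF x] by (simp add: abs_le_iff)
  qed
  have 2: "integral {a..a} g + h a \<le> integral {a..b} g + h b"
  proof (rule deriv_mono_Icc[OF ab, where F="\<lambda>x. integral {a..x} g + h x" and F'="\<lambda>x. g x + h' x"])
    fix x assume x: "x \<in> {a..b}"
    show "((\<lambda>x. integral {a..x} g + h x) has_real_derivative g x + h' x) (at x within {a..b})"
      using I[OF x] d[OF x] by (rule DERIV_add)
    show "0 \<le> g x + h' x" using bd[OF x] by (simp add: abs_le_iff)
  qed
  have "integral {a..a} g = 0" by simp
  then show ?thesis using 1 2 by linarith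
qed

definition wf :: "(int \<Rightarrow> real) \<Rightarrow> real \<Rightarrow> real \<Rightarrow> (real \<Rightarrow> real) \<Rightarrow> int \<Rightarrow> real \<Rightarrow> real" where
  "wf \<theta> l s0 N j \<tau> = exp (l * (\<tau> - \<theta> (2*j) + sk \<theta> j - s0)) * N \<tau>"

lemma repr:
  fixes \<theta> :: "int \<Rightarrow> real" and z G N :: "real \<Rightarrow> real"
  assumes sm: "strict_mono \<theta>" and h: "\<theta> (-1) < 0" "0 < \<theta> 0"
    and Kh: "\<forall>s \<tau>. \<tau> \<le> s \<longrightarrow> \<bar>uu \<theta> a s \<tau>\<bar> \<le> K * exp (- l * (s - \<tau>))"
    and K0: "0 \<le> K" and c0: "0 \<le> c"
    and deriv: "\<And>j \<tau>. k1 \<le> j \<Longrightarrow> \<tau> \<in> {\<theta>(2*j-1)..\<theta>(2*j)} \<Longrightarrow>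
        (z has_real_derivative (- a * z \<tau> - G \<tau>)) (at \<tau> within {\<theta>(2*j-1)..\<theta>(2*j)})"
    and jump: "\<And>j. k1 \<le> j \<Longrightarrow> z (\<theta>(2*j+1)) = (1 - dlt \<theta> j * a) * z (\<theta>(2*j)) - dlt \<theta> j * G (\<theta>(2*j))"
    and Gbd: "\<And>j \<tau>. k1 \<le> j \<Longrightarrow> \<tau> \<in> {\<theta>(2*j-1)..\<theta>(2*j)} \<Longrightarrow> \<bar>G \<tau>\<bar> \<le> c * N \<tau>"
    and Ncont: "\<And>j. k1 \<le> j \<Longrightarrow> continuous_on {\<theta>(2*j-1)..\<theta>(2*j)} N"
    and k: "k1 \<le> k" and t: "t \<in> {\<theta>(2*k-1)..\<theta>(2*k)}"
  shows "\<bar>z t\<bar> \<le> exp (- l * (t - \<theta>(2*k) + sk \<theta> k - sk \<theta> (k1-1))) *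
     (K * \<bar>z (\<theta>(2*k1-1))\<bar> + K * c * ((\<Sum>i\<in>{k1..<k}. integral {\<theta>(2*i-1)..\<theta>(2*i)} (wf \<theta> l (sk \<theta> (k1-1)) N i)
         + dlt \<theta> i * wf \<theta> l (sk \<theta> (k1-1)) N i (\<theta>(2*i))) + integral {\<theta>(2*k-1)..t} (wf \<theta> l (sk \<theta> (k1-1)) N k)))"
proof -
  define s0 where "s0 = sk \<theta> (k1-1)"
  define S where "S = t - \<theta>(2*k) + sk \<theta> k"
  define E where "E = exp (- l * (S - s0))"
  define W where "W = wf \<theta> l s0 N"
  define P where "P = (\<lambda>j. \<Prod>\<nu>\<in>{j..<k}. 1 - dlt \<theta> \<nu> * a)"
  define \<sigma> where "\<sigma> = (\<lambda>j \<tau>. \<tau> - \<theta>(2*j) + sk \<theta> j)"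
  define hh where "hh = (\<lambda>j \<tau>. exp (- a * (S - \<sigma> j \<tau>)) * P j * z \<tau>)"
  have m: "strict_mono (sk \<theta>)" using sk_strict_mono[OF sm h] .
  have skd: "sk \<theta> j = sk \<theta> (j-1) + (\<theta>(2*j) - \<theta>(2*j-1))" for j using sk_diff[OF sm h, of j] by (simp add: eta_def)
  have \<sigma>l: "\<sigma> j (\<theta>(2*j-1)) = sk \<theta> (j-1)" for j unfolding \<sigma>_def using skd[of j] by simp
  have \<sigma>r: "\<sigma> j (\<theta>(2*j)) = sk \<theta> j" for j unfolding \<sigma>_def by simp
  have S_rng: "sk \<theta> (k-1) \<le> S" "S \<le> sk \<theta> k" using t skd[of k] unfolding S_def by auto
  have expsplit: "exp (- l * (S - x)) = E * exp (l * (x - s0))" for x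
  proof -
    have e: "- l * (S - x) = - l * (S - s0) + l * (x - s0)" by (simp add: algebra_simps)
    show ?thesis unfolding E_def by (subst e) (rule exp_add)
  qed
  have KB: "\<bar>exp (- a * (S - x)) * P j\<bar> \<le> K * exp (- l * (S - x))"
    if "j \<le> k" "sk \<theta> (j-1) \<le> x" "x \<le> sk \<theta> j" "x \<le> S" for j x
    unfolding P_def by (rule kernel_bound[OF sm h Kh that(1) S_rng that(2-4)])
  have E0: "0 \<le> E" unfolding E_def by simp
  have PB: "\<bar>hh j b - hh j (\<theta>(2*j-1))\<bar> \<le> E * K * c * integral {\<theta>(2*j-1)..b} (W j)"
    if j: "k1 \<le> j" "j \<le> k" and b: "b \<in> {\<theta>(2*j-1)..\<theta>(2*j)}" and jb: "j < k \<or> b \<le> t" for j b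
  proof -
    have sub: "{\<theta>(2*j-1)..b} \<subseteq> {\<theta>(2*j-1)..\<theta>(2*j)}" using b by auto
    have Wc: "continuous_on {\<theta>(2*j-1)..b} (\<lambda>x. (E*K*c) * W j x)"
      unfolding W_def wf_def
      by (intro continuous_intros continuous_on_subset[OF Ncont[OF j(1)] sub])
    have "\<bar>hh j b - hh j (\<theta>(2*j-1))\<bar> \<le> integral {\<theta>(2*j-1)..b} (\<lambda>x. (E*K*c) * W j x)"
    proof (rule abs_diff_le_integral[where h'="\<lambda>x. - (exp (- a * (S - \<sigma> j x)) * P j) * G x"])
      show "\<theta>(2*j-1) \<le> b" using b by simp
      show "continuous_on {\<theta>(2*j-1)..b} (\<lambda>x. (E*K*c) * W j x)" by (rule Wc)
    next
      fix x assume x: "x \<in> {\<theta>(2*j-1)..b}"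
      then have xp: "x \<in> {\<theta>(2*j-1)..\<theta>(2*j)}" using sub by auto
      have dz: "(z has_real_derivative (- a * z x - G x)) (at x within {\<theta>(2*j-1)..b})"
        using DERIV_subset[OF deriv[OF j(1) xp] sub] .
      have de: "((\<lambda>x. exp (- a * (S - \<sigma> j x))) has_real_derivative exp (- a * (S - \<sigma> j x)) * a) (at x within {\<theta>(2*j-1)..b})"
        unfolding \<sigma>_def by (auto intro!: derivative_eq_intros simp: algebra_simps)
      have "(hh j has_real_derivative (exp (- a * (S - \<sigma> j x)) * a * P j) * z x + (- a * z x - G x) * (exp (- a * (S - \<sigma> j x)) * P j)) (at x within {\<theta>(2*j-1)..b})"
        unfolding hh_def by (rule DERIV_mult[OF DERIV_cmult_right[OF de] dz])
      then show "(hh j has_real_derivative - (exp (- a * (S - \<sigma> j x)) * P j) * G x) (at x within {\<theta>(2*j-1)..b})"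
        by (rule DERIV_cong) (simp add: algebra_simps)
      have xs: "\<sigma> j x \<le> S"
      proof (cases "j < k")
        case True
        have "\<sigma> j x \<le> sk \<theta> j" using xp unfolding \<sigma>_def by simp
        also have "sk \<theta> j \<le> sk \<theta> (k-1)" using True m strict_mono_less_eq by fastforce
        finally show ?thesis using S_rng by simp
      next
        case False
        then have "j = k" "b \<le> t" using jb j by auto
        then show ?thesis using x unfolding \<sigma>_def S_def by simp
      qed
      have xr: "sk \<theta> (j-1) \<le> \<sigma> j x" "\<sigma> j x \<le> sk \<theta> j"
        using xp skd[of j] unfolding \<sigma>_def by auto
      have "\<bar>- (exp (- a * (S - \<sigma> j x)) * P j) * G x\<bar> = \<bar>exp (- a * (S - \<sigma> j x)) * P j\<bar> * \<bar>G x\<bar>"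
        by (simp add: abs_mult)
      also have "\<dots> \<le> (K * exp (- l * (S - \<sigma> j x))) * (c * N x)"
        by (rule mult_mono[OF KB[OF j(2) xr xs] Gbd[OF j(1) xp]]) (simp_all add: K0)
      also have "\<dots> = (E*K*c) * W j x"
        unfolding W_def wf_def expsplit \<sigma>_def by (simp add: algebra_simps)
      finally show "\<bar>- (exp (- a * (S - \<sigma> j x)) * P j) * G x\<bar> \<le> (E*K*c) * W j x" .
    qed
    then show ?thesis by simp
  qed
  have JB: "\<bar>hh (j+1) (\<theta>(2*(j+1)-1)) - hh j (\<theta>(2*j))\<bar> \<le> E * K * c * (dlt \<theta> j * W j (\<theta>(2*j)))"
    if j: "k1 \<le> j" "j < k" for j
  proof -
    have Pj: "P j = (1 - dlt \<theta> j * a) * P (j+1)"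
    proof -
      have "{j..<k} = insert j {j+1..<k}" using j by auto
      then show ?thesis unfolding P_def by simp
    qed
    have e1: "\<theta>(2*(j+1)-1) = \<theta>(2*j+1)" by (simp add: algebra_simps)
    have s1: "\<sigma> (j+1) (\<theta>(2*j+1)) = sk \<theta> j" using \<sigma>l[of "j+1"] e1 by simp
    have "hh (j+1) (\<theta>(2*(j+1)-1)) - hh j (\<theta>(2*j)) =
        - (exp (- a * (S - sk \<theta> j)) * P (j+1)) * (dlt \<theta> j * G (\<theta>(2*j)))"
      unfolding hh_def e1 s1 \<sigma>r jump[OF j(1)] Pj by (simp add: algebra_simps)
    then have "\<bar>hh (j+1) (\<theta>(2*(j+1)-1)) - hh j (\<theta>(2*j))\<bar> =
        \<bar>exp (- a * (S - sk \<theta> j)) * P (j+1)\<bar> * (dlt \<theta> j * \<bar>G (\<theta>(2*j))\<bar>)"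
      using dlt_pos[OF sm, of j] by (simp add: abs_mult)
    also have "\<dots> \<le> (K * exp (- l * (S - sk \<theta> j))) * (dlt \<theta> j * (c * N (\<theta>(2*j))))"
    proof (rule mult_mono)
      have "sk \<theta> j \<le> sk \<theta> (k-1)" using j m strict_mono_less_eq by fastforce
      then show "\<bar>exp (- a * (S - sk \<theta> j)) * P (j+1)\<bar> \<le> K * exp (- l * (S - sk \<theta> j))"
        using KB[of "j+1" "sk \<theta> j"] j S_rng strict_monoD[OF m, of j "j+1"] by auto
      show "dlt \<theta> j * \<bar>G (\<theta>(2*j))\<bar> \<le> dlt \<theta> j * (c * N (\<theta>(2*j)))"
        using Gbd[OF j(1), of "\<theta>(2*j)"] dlt_pos[OF sm, of j] sm strict_mono_less_eq[of \<theta> "2*j-1" "2*j"]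
        by (intro mult_left_mono) auto
    qed (use dlt_pos[OF sm, of j] in \<open>simp_all add: K0\<close>)
    also have "\<dots> = E * K * c * (dlt \<theta> j * W j (\<theta>(2*j)))"
      unfolding W_def wf_def expsplit by (simp add: algebra_simps)
    finally show ?thesis .
  qed
  have ST: "\<bar>hh k1 (\<theta>(2*k1-1))\<bar> \<le> E * K * \<bar>z (\<theta>(2*k1-1))\<bar>"
  proof -
    have "\<bar>hh k1 (\<theta>(2*k1-1))\<bar> = \<bar>exp (- a * (S - s0)) * P k1\<bar> * \<bar>z (\<theta>(2*k1-1))\<bar>"
      unfolding hh_def \<sigma>l s0_def by (simp add: abs_mult)
    also have "\<dots> \<le> (K * exp (- l * (S - s0))) * \<bar>z (\<theta>(2*k1-1))\<bar>"
    proof (rule mult_right_mono)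
      have "sk \<theta> (k1-1) \<le> sk \<theta> (k-1)" using k m strict_mono_less_eq by fastforce
      then show "\<bar>exp (- a * (S - s0)) * P k1\<bar> \<le> K * exp (- l * (S - s0))"
        using KB[of k1 s0] k S_rng m strict_mono_less_eq skd[of k1] sm strict_mono_less_eq[of \<theta> "2*k1-1" "2*k1"]
        unfolding s0_def by auto
    qed simp
    also have "\<dots> = E * K * \<bar>z (\<theta>(2*k1-1))\<bar>" unfolding E_def by simp
    finally show ?thesis .
  qed
  have IND: "\<bar>hh (k1 + int n) (\<theta>(2*(k1 + int n)-1))\<bar> \<le> E * K * \<bar>z (\<theta>(2*k1-1))\<bar>
      + E * K * c * (\<Sum>i\<in>{k1..<k1 + int n}. integral {\<theta>(2*i-1)..\<theta>(2*i)} (W i) + dlt \<theta> i * W i (\<theta>(2*i)))"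
    if "k1 + int n \<le> k" for n
    using that
  proof (induction n)
    case 0 then show ?case using ST by simp
  next
    case (Suc n)
    define j where "j = k1 + int n"
    have j: "k1 \<le> j" "j < k" using Suc.prems unfolding j_def by auto
    have e: "k1 + int (Suc n) = j + 1" unfolding j_def by simp
    have piece: "\<bar>hh j (\<theta>(2*j)) - hh j (\<theta>(2*j-1))\<bar> \<le> E * K * c * integral {\<theta>(2*j-1)..\<theta>(2*j)} (W j)"
      using PB[of j "\<theta>(2*j)"] j sm strict_mono_less_eq[of \<theta> "2*j-1" "2*j"] by auto
    have IH: "\<bar>hh j (\<theta>(2*j-1))\<bar> \<le> E * K * \<bar>z (\<theta>(2*k1-1))\<bar>
      + E * K * c * (\<Sum>i\<in>{k1..<j}. integral {\<theta>(2*i-1)..\<theta>(2*i)} (W i) + dlt \<theta> i * W i (\<theta>(2*i)))"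
      using Suc.IH Suc.prems unfolding j_def by simp
    have sumeq: "{k1..<j+1} = insert j {k1..<j}" using j by auto
    show ?case unfolding e sumeq using IH piece JB[OF j]
      by (simp add: algebra_simps)
  qed
  have hk: "\<bar>hh k (\<theta>(2*k-1))\<bar> \<le> E * K * \<bar>z (\<theta>(2*k1-1))\<bar>
      + E * K * c * (\<Sum>i\<in>{k1..<k}. integral {\<theta>(2*i-1)..\<theta>(2*i)} (W i) + dlt \<theta> i * W i (\<theta>(2*i)))"
    using IND[of "nat (k - k1)"] k by simp
  have last: "\<bar>hh k t - hh k (\<theta>(2*k-1))\<bar> \<le> E * K * c * integral {\<theta>(2*k-1)..t} (W k)"
    using PB[of k t] k t by auto
  have "hh k t = z t" unfolding hh_def P_def \<sigma>_def S_def by simp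
  then have "\<bar>z t\<bar> \<le> E * K * \<bar>z (\<theta>(2*k1-1))\<bar>
      + E * K * c * (\<Sum>i\<in>{k1..<k}. integral {\<theta>(2*i-1)..\<theta>(2*i)} (W i) + dlt \<theta> i * W i (\<theta>(2*i)))
      + E * K * c * integral {\<theta>(2*k-1)..t} (W k)"
    using hk last by linarith
  then show ?thesis unfolding E_def S_def W_def s0_def by (simp add: algebra_simps)
qed

lemma gronwall_pieces:
  fixes \<theta> :: "int \<Rightarrow> real" and w :: "int \<Rightarrow> real \<Rightarrow> real"
  assumes sm: "strict_mono \<theta>" and h: "\<theta> (-1) < 0" "0 < \<theta> 0"
    and A0: "0 \<le> A" and D0: "0 \<le> D"
    and wc: "\<And>j. k1 \<le> j \<Longrightarrow> continuous_on {\<theta>(2*j-1)..\<theta>(2*j)} (w j)"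
    and hyp: "\<And>k t. k1 \<le> k \<Longrightarrow> t \<in> {\<theta>(2*k-1)..\<theta>(2*k)} \<Longrightarrow>
       w k t \<le> A + D * ((\<Sum>i\<in>{k1..<k}. integral {\<theta>(2*i-1)..\<theta>(2*i)} (w i) + dlt \<theta> i * w i (\<theta>(2*i)))
                + integral {\<theta>(2*k-1)..t} (w k))"
    and k: "k1 \<le> k" and t: "t \<in> {\<theta>(2*k-1)..\<theta>(2*k)}"
  shows "w k t \<le> A * exp (D * (t - \<theta>(2*k) + sk \<theta> k - sk \<theta> (k1-1))) * (\<Prod>i\<in>{k1..<k}. 1 + D * dlt \<theta> i)"
proof -
  define s0 where "s0 = sk \<theta> (k1-1)"
  define Sg where "Sg = (\<lambda>k. \<Sum>i\<in>{k1..<k}. integral {\<theta>(2*i-1)..\<theta>(2*i)} (w i) + dlt \<theta> i * w i (\<theta>(2*i)))"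
  define R where "R = (\<lambda>k t. A + D * (Sg k + integral {\<theta>(2*k-1)..t} (w k)))"
  define Pr where "Pr = (\<lambda>k. \<Prod>i\<in>{k1..<k}. 1 + D * dlt \<theta> i)"
  have skd: "sk \<theta> j = sk \<theta> (j-1) + (\<theta>(2*j) - \<theta>(2*j-1))" for j
    using sk_diff[OF sm h, of j] by (simp add: eta_def)
  have lr: "\<theta>(2*j-1) \<le> \<theta>(2*j)" for j using sm strict_mono_less_eq[of \<theta> "2*j-1" "2*j"] by simp
  have wR: "w k t \<le> R k t" if "k1 \<le> k" "t \<in> {\<theta>(2*k-1)..\<theta>(2*k)}" for k t
    using hyp[OF that] unfolding R_def Sg_def by simp
  have C1: "R k t \<le> R k (\<theta>(2*k-1)) * exp (D * (t - \<theta>(2*k-1)))"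
    if k: "k1 \<le> k" and t: "t \<in> {\<theta>(2*k-1)..\<theta>(2*k)}" for k t
  proof -
    define l where "l = \<theta>(2*k-1)"
    have sub: "{l..t} \<subseteq> {\<theta>(2*k-1)..\<theta>(2*k)}" using t unfolding l_def by auto
    have wc': "continuous_on {l..t} (w k)" using continuous_on_subset[OF wc[OF k] sub] .
    have "- (R k l * exp (- D * (l - l))) \<le> - (R k t * exp (- D * (t - l)))"
    proof (rule deriv_mono_Icc[where F="\<lambda>x. - (R k x * exp (- D * (x - l)))" and a=l and b=t and F'="\<lambda>x. D * exp (- D * (x - l)) * (R k x - w k x)"])
      show "l \<le> t" using t unfolding l_def by simp
    next
      fix x assume x: "x \<in> {l..t}"
      have dI: "((\<lambda>x. integral {l..x} (w k)) has_real_derivative w k x) (at x within {l..t})"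
        using integral_has_real_derivative[OF wc' x] .
      have dE: "((\<lambda>x. exp (- D * (x - l))) has_real_derivative exp (- D * (x - l)) * (- D)) (at x within {l..t})"
        by (auto intro!: derivative_eq_intros)
      have dR: "((\<lambda>x. R k x) has_real_derivative D * w k x) (at x within {l..t})"
        unfolding R_def l_def[symmetric] by (auto intro!: derivative_eq_intros dI)
      have "((\<lambda>x. - (R k x * exp (- D * (x - l)))) has_real_derivative
          - (D * w k x * exp (- D * (x - l)) + exp (- D * (x - l)) * (- D) * R k x)) (at x within {l..t})"
        by (rule DERIV_minus[OF DERIV_mult[OF dR dE]])
      then show "((\<lambda>x. - (R k x * exp (- D * (x - l)))) has_real_derivative
          D * exp (- D * (x - l)) * (R k x - w k x)) (at x within {l..t})"
        by (rule DERIV_cong) (simp add: algebra_simps)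
      have "w k x \<le> R k x" using wR[OF k] x sub by auto
      then show "0 \<le> D * exp (- D * (x - l)) * (R k x - w k x)" using D0 by simp
    qed
    then have "R k t * exp (- D * (t - l)) \<le> R k l" by simp
    then have "R k t * exp (- D * (t - l)) * exp (D * (t - l)) \<le> R k l * exp (D * (t - l))"
      by (simp add: mult_right_mono)
    then show ?thesis unfolding l_def by (simp add: mult.assoc exp_add[symmetric])
  qed
  have C2: "R (k+1) (\<theta>(2*(k+1)-1)) \<le> (1 + D * dlt \<theta> k) * R k (\<theta>(2*k))"
    if k: "k1 \<le> k" for k
  proof -
    have "Sg (k+1) = Sg k + (integral {\<theta>(2*k-1)..\<theta>(2*k)} (w k) + dlt \<theta> k * w k (\<theta>(2*k)))"
    proof -
      have "{k1..<k+1} = insert k {k1..<k}" using k by auto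
      then show ?thesis unfolding Sg_def by simp
    qed
    then have e: "R (k+1) (\<theta>(2*(k+1)-1)) = R k (\<theta>(2*k)) + D * dlt \<theta> k * w k (\<theta>(2*k))"
      unfolding R_def by (simp add: algebra_simps)
    have "w k (\<theta>(2*k)) \<le> R k (\<theta>(2*k))" using wR[OF k] lr[of k] by simp
    then have "D * dlt \<theta> k * w k (\<theta>(2*k)) \<le> D * dlt \<theta> k * R k (\<theta>(2*k))"
      using D0 dlt_pos[OF sm, of k] by (intro mult_left_mono) auto
    then show ?thesis unfolding e by (simp add: algebra_simps)
  qed
  have IND: "R (k1 + int n) (\<theta>(2*(k1 + int n)-1)) \<le> A * exp (D * (sk \<theta> (k1 + int n - 1) - s0)) * Pr (k1 + int n)" for n
  proof (induction n)
    case 0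
    show ?case unfolding R_def Sg_def Pr_def s0_def by simp
  next
    case (Suc n)
    define j where "j = k1 + int n"
    have j: "k1 \<le> j" unfolding j_def by simp
    have e: "k1 + int (Suc n) = j + 1" unfolding j_def by simp
    have IH: "R j (\<theta>(2*j-1)) \<le> A * exp (D * (sk \<theta> (j - 1) - s0)) * Pr j" using Suc.IH unfolding j_def .
    have Prs: "Pr (j+1) = (1 + D * dlt \<theta> j) * Pr j"
    proof -
      have "{k1..<j+1} = insert j {k1..<j}" using j by auto
      then show ?thesis unfolding Pr_def by simp
    qed
    have q0: "0 \<le> 1 + D * dlt \<theta> j" using D0 dlt_pos[OF sm, of j] by simp
    have "R (j+1) (\<theta>(2*(j+1)-1)) \<le> (1 + D * dlt \<theta> j) * R j (\<theta>(2*j))" by (rule C2[OF j])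
    also have "\<dots> \<le> (1 + D * dlt \<theta> j) * (R j (\<theta>(2*j-1)) * exp (D * (\<theta>(2*j) - \<theta>(2*j-1))))"
      using C1[OF j, of "\<theta>(2*j)"] lr[of j] q0 by (intro mult_left_mono) auto
    also have "\<dots> \<le> (1 + D * dlt \<theta> j) * ((A * exp (D * (sk \<theta> (j - 1) - s0)) * Pr j) * exp (D * (\<theta>(2*j) - \<theta>(2*j-1))))"
      using IH q0 by (intro mult_left_mono mult_right_mono) auto
    also have "\<dots> = A * exp (D * (sk \<theta> j - s0)) * Pr (j+1)"
    proof -
      have "exp (D * (sk \<theta> (j - 1) - s0)) * exp (D * (\<theta>(2*j) - \<theta>(2*j-1))) = exp (D * (sk \<theta> j - s0))"
      proof -
        have "(sk \<theta> (j - 1) - s0) + (\<theta>(2*j) - \<theta>(2*j-1)) = sk \<theta> j - s0" using skd[of j] by simp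
        then have "D * (sk \<theta> (j - 1) - s0) + D * (\<theta>(2*j) - \<theta>(2*j-1)) = D * (sk \<theta> j - s0)"
          by (metis distrib_left)
        then show ?thesis unfolding exp_add[symmetric] by simp
      qed
      then show ?thesis unfolding Prs by (simp add: algebra_simps)
    qed
    finally show ?case unfolding e by simp
  qed
  have Rl: "R k (\<theta>(2*k-1)) \<le> A * exp (D * (sk \<theta> (k - 1) - s0)) * Pr k"
    using IND[of "nat (k - k1)"] k by simp
  have "w k t \<le> R k t" by (rule wR[OF k t])
  also have "\<dots> \<le> R k (\<theta>(2*k-1)) * exp (D * (t - \<theta>(2*k-1)))" by (rule C1[OF k t])
  also have "\<dots> \<le> (A * exp (D * (sk \<theta> (k - 1) - s0)) * Pr k) * exp (D * (t - \<theta>(2*k-1)))"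
    using Rl by (simp add: mult_right_mono)
  also have "\<dots> = A * exp (D * (t - \<theta>(2*k) + sk \<theta> k - s0)) * Pr k"
  proof -
    have "exp (D * (sk \<theta> (k - 1) - s0)) * exp (D * (t - \<theta>(2*k-1))) = exp (D * (t - \<theta>(2*k) + sk \<theta> k - s0))"
    proof -
      have "(sk \<theta> (k - 1) - s0) + (t - \<theta>(2*k-1)) = t - \<theta>(2*k) + sk \<theta> k - s0" using skd[of k] by simp
      then have "D * (sk \<theta> (k - 1) - s0) + D * (t - \<theta>(2*k-1)) = D * (t - \<theta>(2*k) + sk \<theta> k - s0)"
        by (metis distrib_left)
      then show ?thesis unfolding exp_add[symmetric] by simp
    qed
    then show ?thesis by (simp add: algebra_simps)
  qed
  finally show ?thesis unfolding Pr_def s0_def .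
qed

lemma theta_per_int:
  fixes \<theta> :: "int \<Rightarrow> real" and \<omega> :: real
  assumes per: "\<forall>k. \<theta> (k + 2 * int p) = \<theta> k + \<omega>"
  shows "\<theta> (k + 2 * int p * q) = \<theta> k + \<omega> * of_int q"
proof -
  have pos: "\<theta> (k + 2 * int p * int n) = \<theta> k + \<omega> * real n" for k n
  proof (induction n arbitrary: k)
    case 0 then show ?case by simp
  next
    case (Suc n)
    have "\<theta> (k + 2 * int p * int (Suc n)) = \<theta> ((k + 2 * int p * int n) + 2 * int p)"
      by (simp add: algebra_simps)
    also have "\<dots> = \<theta> k + \<omega> * n + \<omega>" using per Suc.IH by simp
    finally show ?case by (simp add: algebra_simps)
  qed
  show ?thesis
  proof (cases "0 \<le> q")
    case True then show ?thesis using pos[of k "nat q"] by simp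
  next
    case False
    have "\<theta> ((k + 2 * int p * q) + 2 * int p * int (nat (-q))) = \<theta> (k + 2 * int p * q) + \<omega> * real (nat (-q))"
      by (rule pos)
    moreover have "(k + 2 * int p * q) + 2 * int p * int (nat (-q)) = k" using False by simp
    ultimately show ?thesis using False by simp
  qed
qed

lemma dlt_per:
  fixes \<theta> :: "int \<Rightarrow> real" and \<omega> :: real
  assumes per: "\<forall>k. \<theta> (k + 2 * int p) = \<theta> k + \<omega>"
  shows "dlt \<theta> (k + int p * q) = dlt \<theta> k"
proof -
  have "\<theta> (2 * (k + int p * q) + 1) = \<theta> ((2*k+1) + 2 * int p * q)" by (simp add: algebra_simps)
  moreover have "\<theta> (2 * (k + int p * q)) = \<theta> ((2*k) + 2 * int p * q)" by (simp add: algebra_simps)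
  ultimately show ?thesis unfolding dlt_def using theta_per_int[OF per] by simp
qed

lemma eta_per:
  fixes \<theta> :: "int \<Rightarrow> real" and \<omega> :: real
  assumes per: "\<forall>k. \<theta> (k + 2 * int p) = \<theta> k + \<omega>"
  shows "eta \<theta> (k + int p) = eta \<theta> k"
proof -
  have "\<theta> (2 * (k + int p) - 1) = \<theta> ((2*k-1) + 2 * int p)" by (simp add: algebra_simps)
  moreover have "\<theta> (2 * (k + int p)) = \<theta> ((2*k) + 2 * int p)" by (simp add: algebra_simps)
  ultimately show ?thesis unfolding eta_def using per by simp
qed

lemma dlt_le_dmax:
  fixes \<theta> :: "int \<Rightarrow> real" and \<omega> :: real
  assumes per: "\<forall>k. \<theta> (k + 2 * int p) = \<theta> k + \<omega>" and p: "1 \<le> p"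
  shows "dlt \<theta> k \<le> dmax \<theta> p"
proof -
  define k' where "k' = (k - 1) mod int p + 1"
  have pp: "0 < int p" using p by simp
  have "(k-1) mod int p < int p" using pos_mod_bound[OF pp] .
  moreover have "0 \<le> (k-1) mod int p" using pos_mod_sign[OF pp] .
  ultimately have k': "k' \<in> {1..int p}" unfolding k'_def by auto
  have "k = k' + int p * ((k - 1) div int p)" unfolding k'_def
    by (metis add.commute add.left_commute diff_add_cancel mult.commute mod_div_mult_eq)
  then have "dlt \<theta> k = dlt \<theta> k'" using dlt_per[OF per, of k' "(k - 1) div int p"] by simp
  also have "\<dots> \<le> dmax \<theta> p" unfolding dmax_def using k' by (intro Max_ge) auto
  finally show ?thesis .
qed

lemma sk_nat:
  assumes sm: "strict_mono (\<theta>::int\<Rightarrow>real)" and h: "\<theta> (-1) < 0" "0 < \<theta> 0"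
  shows "sk \<theta> (int n) = sk \<theta> 0 + sum (eta \<theta>) {1..int n}"
proof (induction n)
  case 0 then show ?case by simp
next
  case (Suc n)
  have "{1..int (Suc n)} = insert (int n + 1) {1..int n}" by auto
  then show ?case using Suc sk_diff[OF sm h, of "1 + int n"] by (simp add: add.commute)
qed

lemma sk_per:
  assumes sm: "strict_mono (\<theta>::int\<Rightarrow>real)" and h: "\<theta> (-1) < 0" "0 < \<theta> 0"
    and per: "\<forall>k. \<theta> (k + 2 * int p) = \<theta> k + \<omega>"
  shows "sk \<theta> (k + int p) = sk \<theta> k + psi_om \<theta> p"
proof -
  define f where "f = (\<lambda>k. sk \<theta> (k + int p) - sk \<theta> k)"
  have step: "f i = f (i - 1)" for i
  proof -
    have "sk \<theta> (i + int p) = sk \<theta> (i + int p - 1) + eta \<theta> (i + int p)"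
      using sk_diff[OF sm h, of "i + int p"] .
    moreover have "sk \<theta> i = sk \<theta> (i - 1) + eta \<theta> i" using sk_diff[OF sm h, of i] .
    moreover have "eta \<theta> (i + int p) = eta \<theta> i" by (rule eta_per[OF per])
    ultimately show ?thesis unfolding f_def by (simp add: algebra_simps)
  qed
  have "f k = f 0"
  proof (induction k rule: int_induct[where k=0])
    case base then show ?case by simp
  next
    case (step1 i) then show ?case using step[of "i+1"] by simp
  next
    case (step2 i) then show ?case using step[of i] by simp
  qed
  moreover have "f 0 = psi_om \<theta> p" unfolding f_def psi_om_def using sk_nat[OF sm h, of p] by simp
  ultimately show ?thesis unfolding f_def by simp
qed

lemma psi_om_pos:
  assumes sm: "strict_mono (\<theta>::int\<Rightarrow>real)" and p: "1 \<le> p"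
  shows "0 < psi_om \<theta> p"
  unfolding psi_om_def using eta_pos[OF sm] p by (intro sum_pos) auto

lemma sk_block:
  assumes sm: "strict_mono (\<theta>::int\<Rightarrow>real)" and h: "\<theta> (-1) < 0" "0 < \<theta> 0"
    and per: "\<forall>k. \<theta> (k + 2 * int p) = \<theta> k + \<omega>"
  shows "sk \<theta> (k + int p * int q) = sk \<theta> k + q * psi_om \<theta> p"
proof (induction q)
  case 0 then show ?case by simp
next
  case (Suc q)
  have "sk \<theta> (k + int p * int (Suc q)) = sk \<theta> ((k + int p * int q) + int p)" by (simp add: algebra_simps)
  also have "\<dots> = sk \<theta> (k + int p * int q) + psi_om \<theta> p" by (rule sk_per[OF sm h per])
  finally show ?case using Suc by (simp add: algebra_simps)
qed

lemma count_bound: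
  assumes sm: "strict_mono (\<theta>::int\<Rightarrow>real)" and h: "\<theta> (-1) < 0" "0 < \<theta> 0"
    and per: "\<forall>k. \<theta> (k + 2 * int p) = \<theta> k + \<omega>" and p: "1 \<le> p"
    and k: "k1 \<le> k" and x: "sk \<theta> (k-1) \<le> x"
  shows "real_of_int (k - k1) \<le> real p * ((x - sk \<theta> (k1-1)) / psi_om \<theta> p + 1)"
proof -
  define q where "q = nat ((k - k1) div int p)"
  have psi: "0 < psi_om \<theta> p" by (rule psi_om_pos[OF sm p])
  have pp: "0 < int p" using p by simp
  have "0 \<le> (k - k1) div int p" using k pp by (simp add: pos_imp_zdiv_nonneg_iff)
  then have qd: "int q = (k - k1) div int p" unfolding q_def by simp
  have r: "k - k1 = int p * int q + (k - k1) mod int p" unfolding qd by simp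
  have rm: "(k - k1) mod int p < int p" "0 \<le> (k - k1) mod int p" using pp by auto
  have "k1 - 1 + int p * int q \<le> k - 1" using r rm by linarith
  then have "sk \<theta> (k1 - 1 + int p * int q) \<le> sk \<theta> (k-1)"
    using sk_strict_mono[OF sm h] strict_mono_less_eq by blast
  then have "sk \<theta> (k1-1) + q * psi_om \<theta> p \<le> x" using sk_block[OF sm h per, of "k1-1" q] x by simp
  then have "q \<le> (x - sk \<theta> (k1-1)) / psi_om \<theta> p" using psi by (simp add: field_simps)
  moreover have "real_of_int (k - k1) \<le> real p * q + real p"
  proof -
    have "k - k1 \<le> int p * int q + int p" using r rm by linarith
    then have "real_of_int (k - k1) \<le> real_of_int (int p * int q + int p)" by (simp only: of_int_le_iff)
    then show ?thesis by simp
  qed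
  ultimately show ?thesis
  proof -
    assume a: "real q \<le> (x - sk \<theta> (k1-1)) / psi_om \<theta> p" and b: "real_of_int (k - k1) \<le> real p * q + real p"
    have "real p * q \<le> real p * ((x - sk \<theta> (k1-1)) / psi_om \<theta> p)" using a by (intro mult_left_mono) auto
    then show ?thesis using b by (simp add: distrib_left)
  qed
qed

lemma final_limit:
  fixes \<theta> :: "int \<Rightarrow> real" and \<omega> :: real and N :: "real \<Rightarrow> real"
  assumes sm: "strict_mono \<theta>" and h: "\<theta> (-1) < 0" "0 < \<theta> 0"
    and per: "\<forall>k. \<theta> (k + 2 * int p) = \<theta> k + \<omega>" and p: "1 \<le> p"
    and A0: "0 \<le> A" and D0: "0 \<le> D"
    and C6: "- lm + D + real p / psi_om \<theta> p * ln (1 + dmax \<theta> p * D) < 0"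
    and bd: "\<And>k t. k1 \<le> k \<Longrightarrow> t \<in> {\<theta>(2*k-1)..\<theta>(2*k)} \<Longrightarrow>
       N t \<le> exp (- lm * (t - \<theta>(2*k) + sk \<theta> k - sk \<theta> (k1-1))) *
          (A * exp (D * (t - \<theta>(2*k) + sk \<theta> k - sk \<theta> (k1-1))) * (\<Prod>i\<in>{k1..<k}. 1 + D * dlt \<theta> i))"
  shows "\<forall>\<epsilon>>0. \<exists>T. \<forall>t\<in>T0 \<theta>. T \<le> t \<longrightarrow> N t < \<epsilon>"
proof -
  define s0 where "s0 = sk \<theta> (k1-1)"
  define dm where "dm = dmax \<theta> p"
  define B where "B = 1 + dm * D"
  define L where "L = ln B"
  define \<psi> where "\<psi> = psi_om \<theta> p"
  define \<mu> where "\<mu> = - lm + D + real p / \<psi> * L"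
  have \<psi>0: "0 < \<psi>" unfolding \<psi>_def by (rule psi_om_pos[OF sm p])
  have \<mu>0: "\<mu> < 0" using C6 unfolding \<mu>_def L_def B_def dm_def \<psi>_def .
  have dm0: "0 < dm" using dlt_le_dmax[OF per p, of 0] dlt_pos[OF sm, of 0] unfolding dm_def by simp
  have B1: "1 \<le> B" unfolding B_def using dm0 D0 by simp
  have L0: "0 \<le> L" unfolding L_def using B1 by simp
  have skd: "sk \<theta> j = sk \<theta> (j-1) + (\<theta>(2*j) - \<theta>(2*j-1))" for j
    using sk_diff[OF sm h, of j] by (simp add: eta_def)
  have m: "strict_mono (sk \<theta>)" by (rule sk_strict_mono[OF sm h])
  have dec: "N t \<le> A * exp (real p * L) * exp (\<mu> * (t - \<theta>(2*k) + sk \<theta> k - s0))"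
    if k: "k1 \<le> k" and t: "t \<in> {\<theta>(2*k-1)..\<theta>(2*k)}" for k t
  proof -
    define \<sigma> where "\<sigma> = t - \<theta>(2*k) + sk \<theta> k"
    define u where "u = \<sigma> - s0"
    have \<sigma>k: "sk \<theta> (k-1) \<le> \<sigma>" unfolding \<sigma>_def using t skd[of k] by simp
    define n where "n = nat (k - k1)"
    have Pi: "(\<Prod>i\<in>{k1..<k}. 1 + D * dlt \<theta> i) \<le> B ^ n"
    proof -
      have "(\<Prod>i\<in>{k1..<k}. 1 + D * dlt \<theta> i) \<le> (\<Prod>i\<in>{k1..<k}. B)"
      proof (rule prod_mono)
        fix i assume "i \<in> {k1..<k}"
        have "dlt \<theta> i \<le> dm" unfolding dm_def by (rule dlt_le_dmax[OF per p])
        then have "D * dlt \<theta> i \<le> D * dm" using D0 by (simp add: mult_left_mono)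
        then show "0 \<le> 1 + D * dlt \<theta> i \<and> 1 + D * dlt \<theta> i \<le> B"
          using D0 dlt_pos[OF sm, of i] unfolding B_def by (simp add: mult.commute)
      qed
      also have "\<dots> = B ^ n" unfolding n_def by simp
      finally show ?thesis .
    qed
    have Bn: "B ^ n = exp (real n * L)" unfolding L_def using B1
      by (simp add: exp_of_nat_mult[symmetric] ln_realpow[symmetric])
    have cnt: "real n \<le> real p * (u / \<psi> + 1)"
      using count_bound[OF sm h per p k \<sigma>k] k unfolding n_def u_def s0_def \<psi>_def by simp
    have "real n * L \<le> real p * (u / \<psi> + 1) * L" using cnt L0 by (rule mult_right_mono)
    then have Pe: "(\<Prod>i\<in>{k1..<k}. 1 + D * dlt \<theta> i) \<le> exp (real p * (u / \<psi> + 1) * L)"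
      using Pi Bn by (metis exp_le_cancel_iff order_trans)
    have "N t \<le> exp (- lm * u) * (A * exp (D * u) * (\<Prod>i\<in>{k1..<k}. 1 + D * dlt \<theta> i))"
      using bd[OF k t] unfolding u_def \<sigma>_def s0_def by simp
    also have "\<dots> \<le> exp (- lm * u) * (A * exp (D * u) * exp (real p * (u / \<psi> + 1) * L))"
      using Pe A0 by (intro mult_left_mono) auto
    also have "\<dots> = A * exp (- lm * u + D * u + real p * (u / \<psi> + 1) * L)"
      by (simp only: exp_add) (simp add: mult_ac)
    also have "- lm * u + D * u + real p * (u / \<psi> + 1) * L = real p * L + \<mu> * u"
      unfolding \<mu>_def using \<psi>0 by (simp add: field_simps)
    also have "A * exp (real p * L + \<mu> * u) = A * exp (real p * L) * exp (\<mu> * u)"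
      by (simp only: exp_add mult.assoc)
    finally show ?thesis unfolding u_def \<sigma>_def by simp
  qed
  show ?thesis
  proof (intro allI impI)
    fix \<epsilon> :: real assume \<epsilon>: "0 < \<epsilon>"
    define Cst where "Cst = A * exp (real p * L) + 1"
    have C0: "0 < Cst" unfolding Cst_def using A0 by (simp add: add_nonneg_pos)
    define X where "X = max 0 (ln (\<epsilon> / Cst) / \<mu>) + 1"
    have X0: "0 \<le> X" unfolding X_def by simp
    have "\<mu> * X < ln (\<epsilon> / Cst)"
    proof -
      have "ln (\<epsilon> / Cst) / \<mu> < X" unfolding X_def by simp
      then show ?thesis using \<mu>0 by (simp add: neg_divide_less_eq mult.commute)
    qed
    then have "exp (\<mu> * X) < \<epsilon> / Cst" using \<epsilon> C0 by (metis divide_pos_pos exp_less_cancel_iff exp_ln)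
    then have eX: "Cst * exp (\<mu> * X) < \<epsilon>" using C0 by (simp add: field_simps)
    define M where "M = nat \<lceil>X / \<psi>\<rceil>"
    have MX: "X \<le> real M * \<psi>"
    proof -
      have "X / \<psi> \<le> real M" unfolding M_def by linarith
      then show ?thesis using \<psi>0 by (simp add: field_simps)
    qed
    define Kz where "Kz = k1 + int p * int M"
    show "\<exists>T. \<forall>t\<in>T0 \<theta>. T \<le> t \<longrightarrow> N t < \<epsilon>"
    proof (intro exI ballI impI)
      fix t assume tT: "t \<in> T0 \<theta>" and tg: "\<theta> (2*Kz) + 1 \<le> t"
      obtain k where t: "t \<in> {\<theta>(2*k-1)..\<theta>(2*k)}" using tT unfolding T0_def by auto
      have kK: "Kz < k"
      proof (rule ccontr)
        assume "\<not> Kz < k"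
        then have "\<theta>(2*k) \<le> \<theta>(2*Kz)" using sm strict_mono_less_eq[of \<theta> "2*k" "2*Kz"] by simp
        then show False using t tg by simp
      qed
      have "0 \<le> int p * int M" by simp
      then have k: "k1 \<le> k" using kK unfolding Kz_def by linarith
      have "sk \<theta> (k1 - 1 + int p * int M) \<le> sk \<theta> (k-1)"
        using kK m strict_mono_less_eq unfolding Kz_def by fastforce
      then have "s0 + M * \<psi> \<le> sk \<theta> (k-1)"
        using sk_block[OF sm h per, of "k1-1" M] unfolding s0_def \<psi>_def by simp
      moreover have "sk \<theta> (k-1) \<le> t - \<theta>(2*k) + sk \<theta> k" using t skd[of k] by simp
      ultimately have uX: "X \<le> t - \<theta>(2*k) + sk \<theta> k - s0" using MX by simp
      have "N t \<le> A * exp (real p * L) * exp (\<mu> * (t - \<theta>(2*k) + sk \<theta> k - s0))" by (rule dec[OF k t])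
      also have "\<dots> \<le> A * exp (real p * L) * exp (\<mu> * X)"
        using uX \<mu>0 A0 by (intro mult_left_mono) (auto simp: mult_le_cancel_left_neg)
      also have "\<dots> \<le> Cst * exp (\<mu> * X)" unfolding Cst_def by (simp add: distrib_right)
      also have "\<dots> < \<epsilon>" by (rule eX)
      finally show "N t < \<epsilon>" .
    qed
  qed
qed

lemma continuous_on_Max_fin:
  fixes g :: "'i \<Rightarrow> real \<Rightarrow> real"
  assumes "finite I" "I \<noteq> {}" "\<And>i. i \<in> I \<Longrightarrow> continuous_on S (g i)"
  shows "continuous_on S (\<lambda>t. Max ((\<lambda>i. g i t) ` I))"
  using assms
proof (induction I rule: finite_ne_induct)
  case (singleton x) then show ?case by simp
next
  case (insert x F)
  have "continuous_on S (\<lambda>t. max (g x t) (Max ((\<lambda>i. g i t) ` F)))"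
    using insert by (intro continuous_on_max) auto
  moreover have "Max ((\<lambda>i. g i t) ` insert x F) = max (g x t) (Max ((\<lambda>i. g i t) ` F))" for t
    using insert by simp
  ultimately show ?case by simp
qed

theorem lemma2:
  fixes m n r p :: nat and a K :: "nat \<times> nat \<Rightarrow> real"
    and C :: "nat \<times> nat \<Rightarrow> nat \<times> nat \<Rightarrow> real" and f :: "real \<Rightarrow> real"
    and \<theta> :: "int \<Rightarrow> real" and \<omega> Mf Lf t0 :: real
    and \<Lambda> :: "(nat \<times> nat \<Rightarrow> real) set"
    and F :: "(nat \<times> nat \<Rightarrow> real) \<Rightarrow> (nat \<times> nat \<Rightarrow> real)"
    and \<zeta> :: "int \<Rightarrow> nat \<times> nat \<Rightarrow> real"
    and \<phi> x :: "real \<Rightarrow> nat \<times> nat \<Rightarrow> real"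
  assumes mn: "1 \<le> m" "1 \<le> n"
    and a_pos: "\<forall>ij\<in>Icells m n. 0 < a ij"
    and C_nonneg: "\<forall>ij\<in>Icells m n. \<forall>hl\<in>Icells m n. 0 \<le> C ij hl"
    and f_cont: "continuous_on UNIV f"
    and \<theta>_mono: "strict_mono \<theta>" and \<theta>_0: "\<theta> (-1) < 0" "0 < \<theta> 0"
    and \<omega>_pos: "0 < \<omega>" and \<theta>_per: "\<forall>k. \<theta> (k + 2 * int p) = \<theta> k + \<omega>"
    and \<Lambda>: "\<Lambda> \<subseteq> Rmn m n" "compact \<Lambda>" "F ` \<Lambda> \<subseteq> \<Lambda>" "continuous_on \<Lambda> F"
    and C1: "\<forall>ij\<in>Icells m n. \<forall>k. dlt \<theta> k * a ij \<noteq> 1"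
    and C2: "0 < lam_min m n \<theta> p a"
    and C3: "0 < Mf" "\<forall>s. \<bar>f s\<bar> \<le> Mf"
    and C4: "0 < Lf" "\<forall>s1 s2. \<bar>f s1 - f s2\<bar> \<le> Lf * \<bar>s1 - s2\<bar>"
    and K: "\<forall>ij\<in>Icells m n. 0 < K ij \<and>
              (\<forall>s \<tau>. \<tau> \<le> s \<longrightarrow> \<bar>uu \<theta> (a ij) s \<tau>\<bar> \<le> K ij * exp (- lam \<theta> p (a ij) * (s - \<tau>)))"
    and C5: "(Mf + H0 m n r \<theta> p K a C \<Lambda> F Mf * Lf) * cbar m n r \<theta> p K a C < 1"
    and C6: "- lam_min m n \<theta> p a + dbar m n r \<theta> p K a C \<Lambda> F Mf Lf
             + real p / psi_om \<theta> p * ln (1 + dmax \<theta> p * dbar m n r \<theta> p K a C \<Lambda> F Mf Lf) < 0"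
    and \<zeta>: "\<zeta> \<in> Theta \<Lambda> F"
    and \<phi>_sol: "network_sol m n r a C f \<theta> \<zeta> UNIV \<phi>"
    and \<phi>_bd: "\<forall>t\<in>T0 \<theta>. vnorm m n (\<phi> t) \<le> H0 m n r \<theta> p K a C \<Lambda> F Mf"
    and t0: "t0 \<in> T0 \<theta>"
    and x_sol: "network_sol m n r a C f \<theta> \<zeta> {t0..} x"
  shows "\<forall>\<epsilon>>0. \<exists>T. \<forall>t\<in>T0 \<theta>. T \<le> t \<longrightarrow> vnorm m n (x t - \<phi> t) < \<epsilon>"
proof -
  have p: "1 \<le> p"
  proof (rule ccontr)
    assume "\<not> 1 \<le> p" then have "p = 0" by simp
    then show False using \<theta>_per \<omega>_pos by auto
  qed
  obtain k0 where k0: "t0 \<in> {\<theta>(2*k0-1)..\<theta>(2*k0)}" using t0 unfolding T0_def by auto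
  define k1 where "k1 = k0 + 1"
  define I where "I = Icells m n"
  have finI: "finite I" unfolding I_def Icells_def by simp
  have I11: "(1,1) \<in> I" unfolding I_def Icells_def using mn by simp
  have neI: "I \<noteq> {}" using I11 by auto
  have lr: "\<theta>(2*j-1) \<le> \<theta>(2*j)" for j using \<theta>_mono strict_mono_less_eq[of \<theta> "2*j-1" "2*j"] by simp
  have t0le: "t0 \<le> \<theta>(2*j-1)" if "k1 \<le> j" for j
  proof -
    have "\<theta>(2*k0) \<le> \<theta>(2*j-1)" using that \<theta>_mono strict_mono_less_eq[of \<theta> "2*k0" "2*j-1"] unfolding k1_def by simp
    then show ?thesis using k0 by simp
  qed
  define H where "H = H0 m n r \<theta> p K a C \<Lambda> F Mf"
  define D where "D = dbar m n r \<theta> p K a C \<Lambda> F Mf Lf"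
  define lm where "lm = lam_min m n \<theta> p a"
  define s0 where "s0 = sk \<theta> (k1-1)"
  define N where "N = (\<lambda>t. vnorm m n (x t - \<phi> t))"
  define Kmax where "Kmax = Max (K ` I)"
  define cc where "cc = (\<lambda>ij. (Mf + H*Lf) * Csum m n r C ij)"
  define G where "G = (\<lambda>ij t. (\<Sum>hl\<in>nbhd m n r ij. C ij hl * f (x t hl) * x t ij)
                         - (\<Sum>hl\<in>nbhd m n r ij. C ij hl * f (\<phi> t hl) * \<phi> t ij))"
  have Neq: "N t = Max ((\<lambda>ij. \<bar>x t ij - \<phi> t ij\<bar>) ` I)" for t unfolding N_def vnorm_def I_def by simp
  have zN: "\<bar>x t ij - \<phi> t ij\<bar> \<le> N t" if "ij \<in> I" for t ij
    unfolding Neq using finI that by (intro Max_ge) auto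
  have N0: "0 \<le> N t" for t using zN[OF I11, of t] by simp
  have \<phi>H: "\<bar>\<phi> t ij\<bar> \<le> H" if "t \<in> T0 \<theta>" "ij \<in> I" for t ij
  proof -
    have "\<bar>\<phi> t ij\<bar> \<le> vnorm m n (\<phi> t)" unfolding vnorm_def using finI that(2) unfolding I_def by (intro Max_ge) auto
    then show ?thesis using \<phi>_bd that(1) unfolding H_def by fastforce
  qed
  have H0: "0 \<le> H" using \<phi>H[OF t0 I11] by simp
  have pieceT0: "{\<theta>(2*j-1)..\<theta>(2*j)} \<subseteq> T0 \<theta>" for j unfolding T0_def by auto
  have nbI: "nbhd m n r ij \<subseteq> I" for ij unfolding nbhd_def I_def by auto
  have finnb: "finite (nbhd m n r ij)" for ij using nbI finI finite_subset by blast
  have Mf0: "0 \<le> Mf" and Lf0: "0 \<le> Lf" using C3 C4 by auto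
  have MH0: "0 \<le> Mf + H * Lf" using Mf0 Lf0 H0 by simp
  have Cs0: "0 \<le> Csum m n r C ij" if "ij \<in> I" for ij
    unfolding Csum_def using C_nonneg that nbI unfolding I_def by (intro sum_nonneg) blast
  have cc0: "0 \<le> cc ij" if "ij \<in> I" for ij unfolding cc_def using MH0 Cs0[OF that] by simp
  have dx: "((\<lambda>s. x s ij) has_real_derivative
        (- a ij * x \<tau> ij - (\<Sum>hl\<in>nbhd m n r ij. C ij hl * f (x \<tau> hl) * x \<tau> ij) + \<zeta> j ij))
        (at \<tau> within {\<theta>(2*j-1)..\<theta>(2*j)})"
    if j: "k1 \<le> j" and ij: "ij \<in> I" and \<tau>: "\<tau> \<in> {\<theta>(2*j-1)..\<theta>(2*j)}" for j ij \<tau>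
  proof -
    have eq: "{\<theta>(2*j-1)..\<theta>(2*j)} \<inter> {t0..} = {\<theta>(2*j-1)..\<theta>(2*j)}" using t0le[OF j] by auto
    have "\<forall>t\<in>{\<theta>(2*j-1)..\<theta>(2*j)} \<inter> {t0..}. ((\<lambda>s. x s ij) has_real_derivative
        (- a ij * x t ij - (\<Sum>hl\<in>nbhd m n r ij. C ij hl * f (x t hl) * x t ij) + \<zeta> j ij))
        (at t within {\<theta>(2*j-1)..\<theta>(2*j)} \<inter> {t0..})"
      using x_sol ij unfolding network_sol_def Let_def I_def by blast
    then show ?thesis using \<tau> unfolding eq by blast
  qed
  have d\<phi>: "((\<lambda>s. \<phi> s ij) has_real_derivative
        (- a ij * \<phi> \<tau> ij - (\<Sum>hl\<in>nbhd m n r ij. C ij hl * f (\<phi> \<tau> hl) * \<phi> \<tau> ij) + \<zeta> j ij))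
        (at \<tau> within {\<theta>(2*j-1)..\<theta>(2*j)})"
    if ij: "ij \<in> I" and \<tau>: "\<tau> \<in> {\<theta>(2*j-1)..\<theta>(2*j)}" for j ij \<tau>
    using \<phi>_sol ij \<tau> unfolding network_sol_def Let_def I_def by auto
  have jx: "x (\<theta>(2*j+1)) ij = (1 - dlt \<theta> j * a ij) * x (\<theta>(2*j)) ij
             - dlt \<theta> j * (\<Sum>hl\<in>nbhd m n r ij. C ij hl * f (x (\<theta>(2*j)) hl) * x (\<theta>(2*j)) ij)
             + dlt \<theta> j * \<zeta> j ij"
    if j: "k1 \<le> j" and ij: "ij \<in> I" for j ij
  proof -
    have "\<theta>(2*j) \<in> {t0..}" using t0le[OF j] lr[of j] by simp
    then show ?thesis using x_sol ij unfolding network_sol_def I_def by blast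
  qed
  have j\<phi>: "\<phi> (\<theta>(2*j+1)) ij = (1 - dlt \<theta> j * a ij) * \<phi> (\<theta>(2*j)) ij
             - dlt \<theta> j * (\<Sum>hl\<in>nbhd m n r ij. C ij hl * f (\<phi> (\<theta>(2*j)) hl) * \<phi> (\<theta>(2*j)) ij)
             + dlt \<theta> j * \<zeta> j ij"
    if ij: "ij \<in> I" for j ij
    using \<phi>_sol ij unfolding network_sol_def I_def by blast
  have dz: "((\<lambda>s. x s ij - \<phi> s ij) has_real_derivative (- a ij * (x \<tau> ij - \<phi> \<tau> ij) - G ij \<tau>))
        (at \<tau> within {\<theta>(2*j-1)..\<theta>(2*j)})"
    if j: "k1 \<le> j" and ij: "ij \<in> I" and \<tau>: "\<tau> \<in> {\<theta>(2*j-1)..\<theta>(2*j)}" for j ij \<tau>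
    using DERIV_diff[OF dx[OF j ij \<tau>] d\<phi>[OF ij \<tau>]]
    by (rule DERIV_cong) (simp add: G_def algebra_simps)
  have jz: "x (\<theta>(2*j+1)) ij - \<phi> (\<theta>(2*j+1)) ij = (1 - dlt \<theta> j * a ij) * (x (\<theta>(2*j)) ij - \<phi> (\<theta>(2*j)) ij)
             - dlt \<theta> j * G ij (\<theta>(2*j))"
    if j: "k1 \<le> j" and ij: "ij \<in> I" for j ij
    unfolding jx[OF j ij] j\<phi>[OF ij] G_def by (simp add: algebra_simps)
  have Gb: "\<bar>G ij \<tau>\<bar> \<le> cc ij * N \<tau>" if ij: "ij \<in> I" and \<tau>: "\<tau> \<in> T0 \<theta>" for ij \<tau>
  proof -
    have "G ij \<tau> = (\<Sum>hl\<in>nbhd m n r ij. C ij hl * (f (x \<tau> hl) * x \<tau> ij - f (\<phi> \<tau> hl) * \<phi> \<tau> ij))"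
      unfolding G_def by (simp add: sum_subtractf[symmetric] algebra_simps)
    also have "\<bar>\<dots>\<bar> \<le> (\<Sum>hl\<in>nbhd m n r ij. \<bar>C ij hl * (f (x \<tau> hl) * x \<tau> ij - f (\<phi> \<tau> hl) * \<phi> \<tau> ij)\<bar>)"
      by (rule sum_abs)
    also have "\<dots> \<le> (\<Sum>hl\<in>nbhd m n r ij. C ij hl * ((Mf + H*Lf) * N \<tau>))"
    proof (rule sum_mono)
      fix hl assume hl: "hl \<in> nbhd m n r ij"
      then have hlI: "hl \<in> I" using nbI[of ij] by blast
      have C0: "0 \<le> C ij hl" using C_nonneg ij hlI unfolding I_def by blast
      have "f (x \<tau> hl) * x \<tau> ij - f (\<phi> \<tau> hl) * \<phi> \<tau> ij
          = f (x \<tau> hl) * (x \<tau> ij - \<phi> \<tau> ij) + (f (x \<tau> hl) - f (\<phi> \<tau> hl)) * \<phi> \<tau> ij"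
        by (simp add: algebra_simps)
      also have "\<bar>\<dots>\<bar> \<le> \<bar>f (x \<tau> hl)\<bar> * \<bar>x \<tau> ij - \<phi> \<tau> ij\<bar> + \<bar>f (x \<tau> hl) - f (\<phi> \<tau> hl)\<bar> * \<bar>\<phi> \<tau> ij\<bar>"
        by (metis abs_mult abs_triangle_ineq)
      also have "\<dots> \<le> Mf * N \<tau> + (Lf * N \<tau>) * H"
      proof (rule add_mono)
        show "\<bar>f (x \<tau> hl)\<bar> * \<bar>x \<tau> ij - \<phi> \<tau> ij\<bar> \<le> Mf * N \<tau>"
          using C3(2) zN[OF ij, of \<tau>] by (intro mult_mono) auto
        have "\<bar>f (x \<tau> hl) - f (\<phi> \<tau> hl)\<bar> \<le> Lf * \<bar>x \<tau> hl - \<phi> \<tau> hl\<bar>" using C4(2) by blast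
        also have "\<dots> \<le> Lf * N \<tau>" using zN[OF hlI, of \<tau>] Lf0 by (intro mult_left_mono) auto
        finally show "\<bar>f (x \<tau> hl) - f (\<phi> \<tau> hl)\<bar> * \<bar>\<phi> \<tau> ij\<bar> \<le> (Lf * N \<tau>) * H"
          using \<phi>H[OF \<tau> ij] Lf0 N0[of \<tau>] by (intro mult_mono) auto
      qed
      also have "\<dots> = (Mf + H*Lf) * N \<tau>" by (simp add: algebra_simps)
      finally have "\<bar>f (x \<tau> hl) * x \<tau> ij - f (\<phi> \<tau> hl) * \<phi> \<tau> ij\<bar> \<le> (Mf + H*Lf) * N \<tau>" .
      then show "\<bar>C ij hl * (f (x \<tau> hl) * x \<tau> ij - f (\<phi> \<tau> hl) * \<phi> \<tau> ij)\<bar> \<le> C ij hl * ((Mf + H*Lf) * N \<tau>)"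
        using C0 by (simp add: abs_mult mult_left_mono)
    qed
    also have "\<dots> = cc ij * N \<tau>" unfolding cc_def Csum_def sum_distrib_right[symmetric] by (simp only: mult_ac)
    finally show ?thesis .
  qed
  have Gb': "\<bar>G ij \<tau>\<bar> \<le> cc ij * N \<tau>" if ij: "ij \<in> I" and "k1 \<le> j" and \<tau>: "\<tau> \<in> {\<theta>(2*j-1)..\<theta>(2*j)}" for ij j \<tau>
  proof -
    have "\<tau> \<in> T0 \<theta>" using \<tau> pieceT0[of j] by blast
    then show ?thesis by (rule Gb[OF ij])
  qed
  have zc: "continuous_on {\<theta>(2*j-1)..\<theta>(2*j)} (\<lambda>s. x s ij - \<phi> s ij)"
    if j: "k1 \<le> j" and ij: "ij \<in> I" for j ij
    unfolding continuous_on_eq_continuous_within using dz[OF j ij] DERIV_continuous by blast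
  have Nc: "continuous_on {\<theta>(2*j-1)..\<theta>(2*j)} N" if j: "k1 \<le> j" for j
  proof -
    have "continuous_on {\<theta>(2*j-1)..\<theta>(2*j)} (\<lambda>t. Max ((\<lambda>ij. \<bar>x t ij - \<phi> t ij\<bar>) ` I))"
      using finI neI by (rule continuous_on_Max_fin) (intro continuous_intros zc[OF j])
    then show ?thesis using Neq by simp
  qed
  have lmle: "lm \<le> lam \<theta> p (a ij)" if "ij \<in> I" for ij
    unfolding lm_def lam_min_def using finI that unfolding I_def by (intro Min_le) auto
  have Kh: "\<forall>s \<tau>. \<tau> \<le> s \<longrightarrow> \<bar>uu \<theta> (a ij) s \<tau>\<bar> \<le> K ij * exp (- lm * (s - \<tau>))"
    if ij: "ij \<in> I" for ij
  proof (intro allI impI)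
    fix s \<tau> :: real assume st: "\<tau> \<le> s"
    have Kp: "0 < K ij" using K ij unfolding I_def by blast
    have "\<bar>uu \<theta> (a ij) s \<tau>\<bar> \<le> K ij * exp (- lam \<theta> p (a ij) * (s - \<tau>))" using K ij st unfolding I_def by blast
    also have "\<dots> \<le> K ij * exp (- lm * (s - \<tau>))"
      using Kp lmle[OF ij] st by (intro mult_left_mono) (auto intro!: mult_right_mono)
    finally show "\<bar>uu \<theta> (a ij) s \<tau>\<bar> \<le> K ij * exp (- lm * (s - \<tau>))" .
  qed
  have K0: "0 \<le> K ij" if "ij \<in> I" for ij using K that unfolding I_def by fastforce
  define W where "W = wf \<theta> lm s0 N"
  define SS where "SS = (\<lambda>k t. (\<Sum>i\<in>{k1..<k}. integral {\<theta>(2*i-1)..\<theta>(2*i)} (W i) + dlt \<theta> i * W i (\<theta>(2*i)))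
          + integral {\<theta>(2*k-1)..t} (W k))"
  have W0: "0 \<le> W j t" for j t unfolding W_def wf_def using N0 by simp
  have Wc: "continuous_on {\<theta>(2*j-1)..\<theta>(2*j)} (W j)" if "k1 \<le> j" for j
    unfolding W_def wf_def by (intro continuous_intros Nc[OF that])
  have SS0: "0 \<le> SS k t" if k: "k1 \<le> k" and t: "t \<in> {\<theta>(2*k-1)..\<theta>(2*k)}" for k t
  proof -
    have "0 \<le> integral {\<theta>(2*i-1)..\<theta>(2*i)} (W i) + dlt \<theta> i * W i (\<theta>(2*i))" if "i \<in> {k1..<k}" for i
    proof -
      have "0 \<le> integral {\<theta>(2*i-1)..\<theta>(2*i)} (W i)"
        using that W0 by (intro integral_nonneg integrable_continuous_interval Wc) auto
      then show ?thesis using W0 dlt_pos[OF \<theta>_mono, of i] by simp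
    qed
    moreover have "0 \<le> integral {\<theta>(2*k-1)..t} (W k)"
    proof (rule integral_nonneg)
      have "{\<theta>(2*k-1)..t} \<subseteq> {\<theta>(2*k-1)..\<theta>(2*k)}" using t by auto
      then show "W k integrable_on {\<theta>(2*k-1)..t}"
        by (intro integrable_continuous_interval continuous_on_subset[OF Wc[OF k]])
    qed (use W0 in auto)
    ultimately show ?thesis unfolding SS_def by (metis (no_types, lifting) add_nonneg_nonneg sum_nonneg)
  qed
  define A where "A = Kmax * N (\<theta>(2*k1-1))"
  have KKm: "K ij \<le> Kmax" if "ij \<in> I" for ij unfolding Kmax_def using finI that by simp
  have KcD: "K ij * cc ij \<le> D" if ij: "ij \<in> I" for ij
  proof -
    have "K ij * Csum m n r C ij \<le> Max ((\<lambda>ij. K ij * Csum m n r C ij) ` I)" using finI ij by simp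
    then have "(Mf + H*Lf) * (K ij * Csum m n r C ij) \<le> (Mf + H*Lf) * Max ((\<lambda>ij. K ij * Csum m n r C ij) ` I)"
      using MH0 by (rule mult_left_mono)
    then show ?thesis unfolding D_def dbar_def cc_def H_def[symmetric] I_def[symmetric] by (simp add: algebra_simps)
  qed
  have D0: "0 \<le> D" using KcD[OF I11] K0[OF I11] cc0[OF I11] by (meson order_trans zero_le_mult_iff)
  have A0: "0 \<le> A" unfolding A_def using K0[OF I11] KKm[OF I11] N0 by simp
  have Nb: "N t \<le> exp (- lm * (t - \<theta>(2*k) + sk \<theta> k - s0)) * (A + D * SS k t)"
    if k: "k1 \<le> k" and t: "t \<in> {\<theta>(2*k-1)..\<theta>(2*k)}" for k t
  proof -
    have "\<bar>x t ij - \<phi> t ij\<bar> \<le> exp (- lm * (t - \<theta>(2*k) + sk \<theta> k - s0)) * (A + D * SS k t)"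
      if ij: "ij \<in> I" for ij
    proof -
      have r: "\<bar>x t ij - \<phi> t ij\<bar> \<le> exp (- lm * (t - \<theta>(2*k) + sk \<theta> k - s0)) *
          (K ij * \<bar>x (\<theta>(2*k1-1)) ij - \<phi> (\<theta>(2*k1-1)) ij\<bar> + K ij * cc ij * SS k t)"
        unfolding SS_def W_def s0_def
        by (rule repr[OF \<theta>_mono \<theta>_0 Kh[OF ij] K0[OF ij] cc0[OF ij] dz[OF _ ij] jz[OF _ ij]
              Gb'[OF ij] Nc k t])
      have "K ij * \<bar>x (\<theta>(2*k1-1)) ij - \<phi> (\<theta>(2*k1-1)) ij\<bar> \<le> A"
        unfolding A_def using KKm[OF ij] zN[OF ij] K0[OF ij] N0 by (intro mult_mono) auto
      moreover have "K ij * cc ij * SS k t \<le> D * SS k t" using KcD[OF ij] SS0[OF k t] by (rule mult_right_mono)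
      ultimately show ?thesis using r by (smt (verit) exp_gt_zero mult_left_mono)
    qed
    then show ?thesis unfolding Neq using finI neI by simp
  qed
  have hyp: "W k t \<le> A + D * SS k t" if k: "k1 \<le> k" and t: "t \<in> {\<theta>(2*k-1)..\<theta>(2*k)}" for k t
  proof -
    have "W k t = exp (lm * (t - \<theta>(2*k) + sk \<theta> k - s0)) * N t" unfolding W_def wf_def by simp
    also have "\<dots> \<le> exp (lm * (t - \<theta>(2*k) + sk \<theta> k - s0)) * (exp (- lm * (t - \<theta>(2*k) + sk \<theta> k - s0)) * (A + D * SS k t))"
      using Nb[OF k t] by (simp add: mult_left_mono)
    also have "\<dots> = A + D * SS k t" by (simp add: mult.assoc[symmetric] exp_add[symmetric])
    finally show ?thesis .
  qed
  have gr: "W k t \<le> A * exp (D * (t - \<theta>(2*k) + sk \<theta> k - sk \<theta> (k1-1))) * (\<Prod>i\<in>{k1..<k}. 1 + D * dlt \<theta> i)"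
    if k: "k1 \<le> k" and t: "t \<in> {\<theta>(2*k-1)..\<theta>(2*k)}" for k t
    by (rule gronwall_pieces[OF \<theta>_mono \<theta>_0 A0 D0 Wc hyp[unfolded SS_def] k t])
  have bd: "N t \<le> exp (- lm * (t - \<theta>(2*k) + sk \<theta> k - sk \<theta> (k1-1))) *
          (A * exp (D * (t - \<theta>(2*k) + sk \<theta> k - sk \<theta> (k1-1))) * (\<Prod>i\<in>{k1..<k}. 1 + D * dlt \<theta> i))"
    if k: "k1 \<le> k" and t: "t \<in> {\<theta>(2*k-1)..\<theta>(2*k)}" for k t
  proof -
    have "N t = exp (- lm * (t - \<theta>(2*k) + sk \<theta> k - s0)) * W k t"
      unfolding W_def wf_def by (simp add: mult.assoc[symmetric] exp_add[symmetric])
    also have "\<dots> \<le> exp (- lm * (t - \<theta>(2*k) + sk \<theta> k - s0)) *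
          (A * exp (D * (t - \<theta>(2*k) + sk \<theta> k - sk \<theta> (k1-1))) * (\<Prod>i\<in>{k1..<k}. 1 + D * dlt \<theta> i))"
      using gr[OF k t] by (simp add: mult_left_mono)
    finally show ?thesis unfolding s0_def .
  qed
  have C6': "- lm + D + real p / psi_om \<theta> p * ln (1 + dmax \<theta> p * D) < 0"
    using C6 unfolding lm_def D_def .
  have "\<forall>\<epsilon>>0. \<exists>T. \<forall>t\<in>T0 \<theta>. T \<le> t \<longrightarrow> N t < \<epsilon>"
    by (rule final_limit[OF \<theta>_mono \<theta>_0 \<theta>_per p A0 D0 C6' bd])
  then show ?thesis unfolding N_def .
qed

end
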